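(* Let $k,n,m,t$ be positive integers. The sum, over all $\pi\in NC^k(n)$ with exactly $m$ blocks, of the number of blocks of $\pi$ of size $tk$ equals $$\binom{nk}{m-1}\binom{n-t-1}{m-2}.$$
   Context: A partition $\pi$ of $[N]=\{1,\dots,N\}$ is non-crossing if there are no $1\le a<b<c<d\le N$ with $a,c$ in one block and $b,d$ in another. $NC^k(n)$ is the set of non-crossing partitions of $[kn]$ all of whose blocks have size divisible by $k$. Binomial coefficients: for integers $a,b$, $\binom{a}{b}=\frac{a!}{b!(a-b)!}$ if $0\le b\le a$, $\binom{-1}{-1}=1$, and $\binom{a}{b}=0$ otherwise. *)

theory Defs
  imports Main "HOL-Library.Disjoint_Sets"
begin

definition noncrossing :: "nat set set \<Rightarrow> bool" where
  "noncrossing P \<longleftrightarrow>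
     \<not> (\<exists>B1\<in>P. \<exists>B2\<in>P. B1 \<noteq> B2 \<and>
          (\<exists>a b c d. a < b \<and> b < c \<and> c < d \<and> a \<in> B1 \<and> c \<in> B1 \<and> b \<in> B2 \<and> d \<in> B2))"

definition NCk :: "nat \<Rightarrow> nat \<Rightarrow> nat set set set" where
  "NCk k n = {P. partition_on {1..k*n} P \<and> noncrossing P \<and> (\<forall>B\<in>P. k dvd card B)}"

text \<open>Binomial coefficient on integers with the paper's convention:
 a!/(b!(a-b)!) if 0 \<le> b \<le> a, binom(-1,-1) = 1, and 0 otherwise.\<close>
definition ibinom :: "int \<Rightarrow> int \<Rightarrow> int" where
  "ibinom a b = (if 0 \<le> b \<and> b \<le> a then int (nat a choose nat b)
                 else if a = -1 \<and> b = -1 then 1 else 0)"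

end

theory Submission
  imports Defs
begin


lemma part_iff: "partition_on A P \<longleftrightarrow> \<Union>P = A \<and> (\<forall>p\<in>P. \<forall>q\<in>P. p \<noteq> q \<longrightarrow> p \<inter> q = {}) \<and> {} \<notin> P"
  by (auto simp: partition_on_def disjoint_def)

lemma nc_iff: "noncrossing P \<longleftrightarrow> (\<forall>B1\<in>P. \<forall>B2\<in>P. \<forall>a b c d. a < b \<longrightarrow> b < c \<longrightarrow> c < d \<longrightarrow>
   a \<in> B1 \<longrightarrow> c \<in> B1 \<longrightarrow> b \<in> B2 \<longrightarrow> d \<in> B2 \<longrightarrow> B1 = B2)"
proof
  assume H: "noncrossing P"
  show "\<forall>B1\<in>P. \<forall>B2\<in>P. \<forall>a b c d. a < b \<longrightarrow> b < c \<longrightarrow> c < d \<longrightarrow>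
   a \<in> B1 \<longrightarrow> c \<in> B1 \<longrightarrow> b \<in> B2 \<longrightarrow> d \<in> B2 \<longrightarrow> B1 = B2"
  proof (intro ballI allI impI)
    fix B1 B2 a b c d assume *: "B1 \<in> P" "B2 \<in> P" "a < b" "b < c" "c < d" "a \<in> B1" "c \<in> B1" "b \<in> B2" "d \<in> B2"
    show "B1 = B2"
    proof (rule ccontr)
      assume "B1 \<noteq> B2"
      with * have ex: "\<exists>B1\<in>P. \<exists>B2\<in>P. B1 \<noteq> B2 \<and>
          (\<exists>a b c d. a < b \<and> b < c \<and> c < d \<and> a \<in> B1 \<and> c \<in> B1 \<and> b \<in> B2 \<and> d \<in> B2)" by meson
      from H ex show False unfolding noncrossing_def by (rule notE)
    qed
  qed
next
  assume H: "\<forall>B1\<in>P. \<forall>B2\<in>P. \<forall>a b c d. a < b \<longrightarrow> b < c \<longrightarrow> c < d \<longrightarrow>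
   a \<in> B1 \<longrightarrow> c \<in> B1 \<longrightarrow> b \<in> B2 \<longrightarrow> d \<in> B2 \<longrightarrow> B1 = B2"
  show "noncrossing P" unfolding noncrossing_def
  proof
    assume "\<exists>B1\<in>P. \<exists>B2\<in>P. B1 \<noteq> B2 \<and>
          (\<exists>a b c d. a < b \<and> b < c \<and> c < d \<and> a \<in> B1 \<and> c \<in> B1 \<and> b \<in> B2 \<and> d \<in> B2)"
    then obtain B1 B2 a b c d where "B1 \<in> P" "B2 \<in> P" "B1 \<noteq> B2" "a < b" "b < c" "c < d" "a \<in> B1" "c \<in> B1" "b \<in> B2" "d \<in> B2" by blast
    with H show False by meson
  qed
qed

definition blk :: "nat set set \<Rightarrow> nat \<Rightarrow> nat set" where
  "blk P x = (THE B. B \<in> P \<and> x \<in> B)"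

lemma blk_eq: assumes "partition_on A P" "B \<in> P" "x \<in> B" shows "blk P x = B"
  unfolding blk_def
proof (rule the_equality)
  show "B \<in> P \<and> x \<in> B" using assms by simp
  fix B' assume B': "B' \<in> P \<and> x \<in> B'"
  have d: "\<forall>p\<in>P. \<forall>q\<in>P. p \<noteq> q \<longrightarrow> p \<inter> q = {}" using assms(1) unfolding part_iff by simp
  show "B' = B"
  proof (rule ccontr)
    assume "B' \<noteq> B"
    then have "B' \<inter> B = {}" using d B' assms(2) by simp
    then show False using B' assms(3) by blast
  qed
qed

lemma blk: "partition_on A P \<Longrightarrow> x \<in> A \<Longrightarrow> blk P x \<in> P \<and> x \<in> blk P x"
proof -
  assume p: "partition_on A P" and x: "x \<in> A"
  have "\<Union>P = A" using p unfolding part_iff by simp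
  then obtain B where "B \<in> P" "x \<in> B" using x by blast
  with blk_eq[OF p this] show ?thesis by simp
qed

definition fst_seg :: "nat set \<Rightarrow> nat \<Rightarrow> nat set" where
  "fst_seg R l = {x\<in>R. card {y\<in>R. y < x} < l}"

lemma seg_exists: "finite (R::nat set) \<Longrightarrow> l \<le> card R \<Longrightarrow> \<exists>F\<subseteq>R. card F = l \<and> (\<forall>x\<in>F. \<forall>y\<in>R-F. x<y)"
proof (induction l)
  case 0 show ?case by (rule exI[of _ "{}"]) simp
next
  case (Suc l)
  have "l \<le> card R" using Suc.prems(2) by simp
  then obtain F where F: "F\<subseteq>R" "card F = l" "\<forall>x\<in>F. \<forall>y\<in>R-F. x<y" using Suc.IH Suc.prems(1) by blast
  have fin: "finite F" using F(1) Suc.prems(1) finite_subset by blast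
  have ne: "R - F \<noteq> {}"
  proof
    assume "R - F = {}"
    then have "R \<subseteq> F" by blast
    then have "card R \<le> card F" using card_mono[OF fin] by blast
    then show False using F(2) Suc.prems(2) by simp
  qed
  define m where "m = Min (R - F)"
  have fR: "finite (R - F)" using Suc.prems(1) by simp
  have m1: "m \<in> R - F" unfolding m_def by (rule Min_in[OF fR ne])
  have m2: "\<forall>y\<in>R-F. m \<le> y" unfolding m_def using Min_le[OF fR] by blast
  note m = m1 m2
  show ?case
  proof (intro exI[of _ "insert m F"] conjI)
    show "insert m F \<subseteq> R" using m(1) F(1) by blast
    have "m \<notin> F" using m(1) by simp
    then show "card (insert m F) = Suc l" using F(2) fin by simp
    show "\<forall>x\<in>insert m F. \<forall>y\<in>R - insert m F. x < y"
    proof (intro ballI)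
      fix x y assume x: "x \<in> insert m F" and y: "y \<in> R - insert m F"
      show "x < y"
      proof (cases "x = m")
        case True
        have "y \<in> R - F" "y \<noteq> m" using y by auto
        then have "m \<le> y" using m(2) by blast
        then show ?thesis using True \<open>y \<noteq> m\<close> by simp
      next
        case False
        then have "x \<in> F" using x by simp
        moreover have "y \<in> R - F" using y by simp
        ultimately show ?thesis using F(3) by simp
      qed
    qed
  qed
qed

lemma seg_unique:
  assumes "finite R" "F \<subseteq> R" "\<forall>x\<in>F. \<forall>y\<in>R-F. x<y"
  shows "fst_seg R (card F) = F"
proof -
  have finF: "finite F" using assms finite_subset by blast
  have "x \<in> F" if "x \<in> R" "card {y\<in>R. y < x} < card F" for x
  proof (rule ccontr)
    assume "x \<notin> F"
    have "F \<subseteq> {y\<in>R. y < x}"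
    proof
      fix z assume z: "z \<in> F"
      then have "z \<in> R" using assms(2) by blast
      moreover have "x \<in> R - F" using that(1) \<open>x \<notin> F\<close> by simp
      ultimately show "z \<in> {y\<in>R. y < x}" using assms(3) z by simp
    qed
    then have "card F \<le> card {y\<in>R. y < x}" using assms(1) by (intro card_mono) auto
    then show False using that by simp
  qed
  moreover have "card {y\<in>R. y < x} < card F" if "x \<in> F" for x
  proof -
    have "{y\<in>R. y < x} \<subseteq> F - {x}"
    proof
      fix y assume y: "y \<in> {y\<in>R. y < x}"
      show "y \<in> F - {x}"
      proof (rule ccontr)
        assume "y \<notin> F - {x}"
        then have "y \<in> R - F" using y by auto
        then have "x < y" using assms(3) that by simp
        then show False using y by simp
      qed
    qed
    then have "card {y\<in>R. y < x} \<le> card (F - {x})" using finF by (intro card_mono) auto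
    also have "\<dots> < card F"
    proof -
      have "card F > 0" using finF that card_gt_0_iff by blast
      then show ?thesis using finF that by simp
    qed
    finally show ?thesis .
  qed
  ultimately show ?thesis unfolding fst_seg_def using assms(2) by blast
qed

lemma seg_props:
  assumes "finite R" "l \<le> card R"
  shows "fst_seg R l \<subseteq> R" "card (fst_seg R l) = l" "\<forall>x\<in>fst_seg R l. \<forall>y\<in>R - fst_seg R l. x < y"
proof -
  obtain F where F: "F\<subseteq>R" "card F = l" "\<forall>x\<in>F. \<forall>y\<in>R-F. x<y" using seg_exists[OF assms] by blast
  have "fst_seg R l = F" using seg_unique[OF assms(1) F(1) F(3)] F(2) by simp
  then show "fst_seg R l \<subseteq> R" "card (fst_seg R l) = l" "\<forall>x\<in>fst_seg R l. \<forall>y\<in>R - fst_seg R l. x < y"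
    using F by auto
qed


definition NCT :: "nat \<Rightarrow> nat set \<Rightarrow> nat set set set" where
  "NCT k T = {P. partition_on T P \<and> noncrossing P \<and> (\<forall>B\<in>P. Min T \<notin> B \<longrightarrow> k dvd card B)}"

definition Psi :: "nat \<Rightarrow> nat \<Rightarrow> nat set set \<Rightarrow> nat \<Rightarrow> nat set set" where
  "Psi t0 a P' l = (P' - {blk P' a}) \<union> {insert t0 (blk P' a - fst_seg (blk P' a) l)}
      \<union> (if l = 0 then {} else {fst_seg (blk P' a) l})"

definition Phi :: "nat \<Rightarrow> nat \<Rightarrow> nat set set \<Rightarrow> nat set set \<times> nat" where
  "Phi t0 a P = (if a \<in> blk P t0 then ((P - {blk P t0}) \<union> {blk P t0 - {t0}}, 0)
     else ((P - {blk P t0, blk P a}) \<union> {(blk P t0 - {t0}) \<union> blk P a}, card (blk P a)))"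

lemma partE:
  assumes "partition_on A P"
  shows "\<Union>P = A" "\<And>p q. p \<in> P \<Longrightarrow> q \<in> P \<Longrightarrow> p \<noteq> q \<Longrightarrow> p \<inter> q = {}" "{} \<notin> P"
  using assms unfolding part_iff by auto

lemma ncE:
  assumes "noncrossing P" "B1 \<in> P" "B2 \<in> P" "a < b" "b < c" "c < d" "a \<in> B1" "c \<in> B1" "b \<in> B2" "d \<in> B2"
  shows "B1 = B2"
  using assms(1) unfolding nc_iff using assms(2-) by blast

locale setp =
  fixes k :: nat and T T' :: "nat set" and t0 \<alpha> :: nat
  assumes fin: "finite T" and t0: "t0 = Min T" and T': "T' = T - {t0}" and ne: "T' \<noteq> {}"
    and al: "\<alpha> = Min T'"
begin

lemma basic: "t0 \<in> T" "\<alpha> \<in> T'" "t0 \<notin> T'" "\<And>x. x \<in> T' \<Longrightarrow> t0 < x" "\<And>x. x \<in> T' \<Longrightarrow> \<alpha> \<le> x"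
  "finite T'" "T = insert t0 T'" "\<And>x. x \<in> T \<Longrightarrow> t0 \<le> x"
proof -
  have Tne: "T \<noteq> {}" using ne T' by auto
  show t: "t0 \<in> T" using t0 Min_in[OF fin Tne] by simp
  show "finite T'" using fin T' by simp
  then show "\<alpha> \<in> T'" using al Min_in ne by simp
  show "t0 \<notin> T'" using T' by simp
  show le: "\<And>x. x \<in> T \<Longrightarrow> t0 \<le> x" using t0 Min_le[OF fin] by simp
  show "\<And>x. x \<in> T' \<Longrightarrow> t0 < x"
  proof -
    fix x assume "x \<in> T'"
    then have "x \<in> T" "x \<noteq> t0" using T' by auto
    then show "t0 < x" using le[of x] by simp
  qed
  show "\<And>x. x \<in> T' \<Longrightarrow> \<alpha> \<le> x" using al Min_le \<open>finite T'\<close> by simp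
  show "T = insert t0 T'" using T' t by auto
qed

lemma NCT_T: "P \<in> NCT k T \<longleftrightarrow> partition_on T P \<and> noncrossing P \<and> (\<forall>B\<in>P. t0 \<notin> B \<longrightarrow> k dvd card B)"
  unfolding NCT_def t0 by simp

lemma NCT_T': "P \<in> NCT k T' \<longleftrightarrow> partition_on T' P \<and> noncrossing P \<and> (\<forall>B\<in>P. \<alpha> \<notin> B \<longrightarrow> k dvd card B)"
  unfolding NCT_def al by simp

end

locale psiloc = setp +
  fixes P' :: "nat set set" and l :: nat
  assumes P': "P' \<in> NCT k T'" and kl: "k dvd l" and lR: "l \<le> card (blk P' \<alpha>)"
begin

definition "R' = blk P' \<alpha>"
definition "F = fst_seg R' l"
definition "E = R' - F"
definition "N0 = insert t0 E"

lemma pp: "partition_on T' P'" "noncrossing P'" "\<And>B. B \<in> P' \<Longrightarrow> \<alpha> \<notin> B \<Longrightarrow> k dvd card B"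
  using P' NCT_T' by auto

lemma R'P: "R' \<in> P'" "\<alpha> \<in> R'" using blk[OF pp(1) basic(2)] R'_def by auto

lemma R'T: "R' \<subseteq> T'" using partE(1)[OF pp(1)] R'P(1) by blast

lemma finR: "finite R'" using R'T basic(6) finite_subset by blast

lemma Fp: "F \<subseteq> R'" "card F = l" "\<And>x y. x \<in> F \<Longrightarrow> y \<in> E \<Longrightarrow> x < y"
  using seg_props[OF finR lR[folded R'_def]] unfolding F_def E_def by auto

lemma finF: "finite F" using Fp(1) finR finite_subset by blast

lemma RFE: "R' = F \<union> E" "F \<inter> E = {}" using Fp(1) unfolding E_def by auto

lemma other: "X \<in> P' \<Longrightarrow> X \<noteq> R' \<Longrightarrow> X \<inter> R' = {} \<and> X \<subseteq> T' \<and> t0 \<notin> X \<and> \<alpha> \<notin> X"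
proof -
  assume X: "X \<in> P'" "X \<noteq> R'"
  have d: "X \<inter> R' = {}" using partE(2)[OF pp(1) X(1) R'P(1) X(2)] .
  have s: "X \<subseteq> T'" using partE(1)[OF pp(1)] X(1) by blast
  show ?thesis using d s basic(3) R'P(2) by blast
qed

lemma Psi_eq: "Psi t0 \<alpha> P' l = (P' - {R'}) \<union> {N0} \<union> (if l = 0 then {} else {F})"
  unfolding Psi_def R'_def F_def E_def N0_def by simp

lemma F0: "l = 0 \<Longrightarrow> F = {}" using Fp(2) finF by simp

lemma Fne: "l \<noteq> 0 \<Longrightarrow> F \<noteq> {}" using Fp(2) by auto

lemma t0N0: "t0 \<in> N0" "t0 \<notin> F" "t0 \<notin> R'" "t0 \<notin> E"
  using R'T basic(3) Fp(1) unfolding N0_def E_def by auto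

lemma alF: "l \<noteq> 0 \<Longrightarrow> \<alpha> \<in> F"
proof (rule ccontr)
  assume l: "l \<noteq> 0" and na: "\<alpha> \<notin> F"
  obtain x where x: "x \<in> F" using Fne[OF l] by blast
  have "\<alpha> \<in> E" using na R'P(2) unfolding E_def by simp
  then have "x < \<alpha>" using Fp(3) x by simp
  moreover have "\<alpha> \<le> x" using basic(5) x Fp(1) R'T by blast
  ultimately show False by simp
qed

lemma alN0: "\<alpha> \<in> N0 \<longleftrightarrow> l = 0"
proof
  assume "\<alpha> \<in> N0"
  then have "\<alpha> \<in> E" using basic(2,3) unfolding N0_def by auto
  then show "l = 0" using alF RFE(2) by blast
next
  assume "l = 0"
  then show "\<alpha> \<in> N0" using F0 R'P(2) unfolding N0_def E_def by simp
qed

lemma N0_notin: "N0 \<notin> P'"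
proof
  assume "N0 \<in> P'"
  then have "N0 \<subseteq> T'" using partE(1)[OF pp(1)] by blast
  then show False using t0N0(1) basic(3) by blast
qed

lemma F_notin: "l \<noteq> 0 \<Longrightarrow> F \<notin> P' - {R'}"
proof
  assume l: "l \<noteq> 0" and "F \<in> P' - {R'}"
  then have "F \<inter> R' = {}" using other by blast
  then show False using Fp(1) Fne[OF l] by blast
qed

lemma Psi_mem: "p \<in> Psi t0 \<alpha> P' l \<longleftrightarrow> (p \<in> P' \<and> p \<noteq> R') \<or> p = N0 \<or> (l \<noteq> 0 \<and> p = F)"
  unfolding Psi_eq by auto

lemma NF: "N0 \<inter> F = {}" using t0N0 RFE unfolding N0_def by blast
lemma XN: "X \<in> P' \<Longrightarrow> X \<noteq> R' \<Longrightarrow> X \<inter> N0 = {}"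
  using other[of X] unfolding N0_def E_def by blast
lemma XF: "X \<in> P' \<Longrightarrow> X \<noteq> R' \<Longrightarrow> X \<inter> F = {}"
  using other[of X] Fp(1) by blast

lemma Psi_part: "partition_on T (Psi t0 \<alpha> P' l)"
proof -
  have U: "\<Union>P' = T'" using partE(1)[OF pp(1)] .
  show ?thesis unfolding part_iff
  proof (intro conjI)
    show "\<Union> (Psi t0 \<alpha> P' l) = T"
    proof
      show "\<Union> (Psi t0 \<alpha> P' l) \<subseteq> T"
      proof
        fix x assume "x \<in> \<Union> (Psi t0 \<alpha> P' l)"
        then obtain p where p: "p \<in> Psi t0 \<alpha> P' l" "x \<in> p" by blast
        from p(1)[unfolded Psi_mem] show "x \<in> T"
        proof (elim disjE conjE)
          assume "p \<in> P'" then show ?thesis using p(2) U basic(7) by blast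
        next
          assume "p = N0" then show ?thesis using p(2) R'T basic(7) unfolding N0_def E_def by blast
        next
          assume "p = F" then show ?thesis using p(2) R'T Fp(1) basic(7) by blast
        qed
      qed
      show "T \<subseteq> \<Union> (Psi t0 \<alpha> P' l)"
      proof
        fix x assume x: "x \<in> T"
        show "x \<in> \<Union> (Psi t0 \<alpha> P' l)"
        proof (cases "x = t0")
          case True then show ?thesis using t0N0(1) Psi_mem by blast
        next
          case False
          then have "x \<in> T'" using x basic(7) by blast
          then obtain X where X: "X \<in> P'" "x \<in> X" using U by blast
          show ?thesis
          proof (cases "X = R'")
            case True
            show ?thesis
            proof (cases "x \<in> F")
              case True
              have "l \<noteq> 0"
              proof
                assume "l = 0"
                then have "F = {}" by (rule F0)
                with True show False by simp
              qed
              then show ?thesis using True Psi_mem by blast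
            next
              case False
              then have "x \<in> N0" using X \<open>X = R'\<close> unfolding N0_def E_def by simp
              then show ?thesis using Psi_mem by blast
            qed
          next
            case False then show ?thesis using X Psi_mem by blast
          qed
        qed
      qed
    qed
  next
    show "\<forall>p\<in>Psi t0 \<alpha> P' l. \<forall>q\<in>Psi t0 \<alpha> P' l. p \<noteq> q \<longrightarrow> p \<inter> q = {}"
    proof (intro ballI impI)
      fix p q assume p: "p \<in> Psi t0 \<alpha> P' l" and q: "q \<in> Psi t0 \<alpha> P' l" and pq: "p \<noteq> q"
      have XY: "X \<inter> Y = {}" if "X \<in> P'" "Y \<in> P'" "X \<noteq> Y" for X Y
        using partE(2)[OF pp(1)] that by blast
      from p[unfolded Psi_mem] q[unfolded Psi_mem] pq show "p \<inter> q = {}"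
        using NF XN XF XY by (metis Int_commute)
    qed
  next
    show "{} \<notin> Psi t0 \<alpha> P' l"
      unfolding Psi_mem using partE(3)[OF pp(1)] Fne t0N0(1) by blast
  qed
qed


lemma ncP: "X \<in> P' \<Longrightarrow> Y \<in> P' \<Longrightarrow> a < b \<Longrightarrow> b < c \<Longrightarrow> c < d \<Longrightarrow> a \<in> X \<Longrightarrow> c \<in> X \<Longrightarrow> b \<in> Y \<Longrightarrow> d \<in> Y \<Longrightarrow> X = Y"
  using ncE[OF pp(2)] by blast

lemma gt_t0: "z \<in> X \<Longrightarrow> X \<in> P' \<Longrightarrow> t0 < z"
  using partE(1)[OF pp(1)] basic(4) by blast

lemma N0_big: "z \<in> N0 \<Longrightarrow> t0 < z \<Longrightarrow> z \<in> E \<and> z \<in> R'"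
  unfolding N0_def E_def by auto

lemma c1: "X \<in> P' \<Longrightarrow> X \<noteq> R' \<Longrightarrow> a < b \<Longrightarrow> b < c \<Longrightarrow> c < d \<Longrightarrow> a \<in> X \<Longrightarrow> c \<in> X \<Longrightarrow> b \<in> N0 \<Longrightarrow> d \<in> N0 \<Longrightarrow> False"
proof -
  assume X: "X \<in> P'" "X \<noteq> R'" and o: "a < b" "b < c" "c < d" and m: "a \<in> X" "c \<in> X" "b \<in> N0" "d \<in> N0"
  have "t0 < a" using gt_t0 X m by blast
  then have "b \<in> R'" "d \<in> R'" using N0_big m o by auto
  then have "X = R'" using ncP[OF X(1) R'P(1) o m(1,2)] by blast
  then show False using X by simp
qed

lemma c2: "X \<in> P' \<Longrightarrow> X \<noteq> R' \<Longrightarrow> a < b \<Longrightarrow> b < c \<Longrightarrow> c < d \<Longrightarrow> a \<in> N0 \<Longrightarrow> c \<in> N0 \<Longrightarrow> b \<in> X \<Longrightarrow> d \<in> X \<Longrightarrow> False"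
proof -
  assume X: "X \<in> P'" "X \<noteq> R'" and o: "a < b" "b < c" "c < d" and m: "a \<in> N0" "c \<in> N0" "b \<in> X" "d \<in> X"
  have "t0 < b" using gt_t0 X m by blast
  then have cR: "c \<in> R'" using N0_big m o by auto
  have "b \<in> T'" using partE(1)[OF pp(1)] X m by blast
  then have "\<alpha> \<le> b" using basic(5) by blast
  moreover have "\<alpha> \<noteq> b" using other[OF X] m by blast
  ultimately have ab: "\<alpha> < b" by simp
  have "R' = X" using ncP[OF R'P(1) X(1) ab o(2,3) R'P(2) cR m(3,4)] .
  then show False using X by simp
qed

lemma c3: "X \<in> P' \<Longrightarrow> X \<noteq> R' \<Longrightarrow> a < b \<Longrightarrow> b < c \<Longrightarrow> c < d \<Longrightarrow> a \<in> X \<Longrightarrow> c \<in> X \<Longrightarrow> b \<in> F \<Longrightarrow> d \<in> F \<Longrightarrow> False"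
proof -
  assume X: "X \<in> P'" "X \<noteq> R'" and o: "a < b" "b < c" "c < d" and m: "a \<in> X" "c \<in> X" "b \<in> F" "d \<in> F"
  have "b \<in> R'" "d \<in> R'" using m Fp(1) by auto
  then have "X = R'" using ncP[OF X(1) R'P(1) o m(1,2)] by simp
  then show False using X by simp
qed

lemma c4: "X \<in> P' \<Longrightarrow> X \<noteq> R' \<Longrightarrow> a < b \<Longrightarrow> b < c \<Longrightarrow> c < d \<Longrightarrow> a \<in> F \<Longrightarrow> c \<in> F \<Longrightarrow> b \<in> X \<Longrightarrow> d \<in> X \<Longrightarrow> False"
proof -
  assume X: "X \<in> P'" "X \<noteq> R'" and o: "a < b" "b < c" "c < d" and m: "a \<in> F" "c \<in> F" "b \<in> X" "d \<in> X"
  have aR: "a \<in> R'" and cR: "c \<in> R'" using m Fp(1) by auto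
  have "R' = X" using ncP[OF R'P(1) X(1) o aR cR m(3,4)] .
  then show False using X by simp
qed

lemma c5: "a < b \<Longrightarrow> b < c \<Longrightarrow> c < d \<Longrightarrow> a \<in> N0 \<Longrightarrow> c \<in> N0 \<Longrightarrow> b \<in> F \<Longrightarrow> d \<in> F \<Longrightarrow> False"
proof -
  assume o: "a < b" "b < c" "c < d" and m: "a \<in> N0" "c \<in> N0" "b \<in> F" "d \<in> F"
  have "t0 < b" using gt_t0[OF _ R'P(1)] m Fp(1) by blast
  then have "c \<in> E" using N0_big m o by auto
  then have "d < c" using Fp(3) m by blast
  then show False using o by simp
qed

lemma c6: "a < b \<Longrightarrow> b < c \<Longrightarrow> c < d \<Longrightarrow> a \<in> F \<Longrightarrow> c \<in> F \<Longrightarrow> b \<in> N0 \<Longrightarrow> d \<in> N0 \<Longrightarrow> False"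
proof -
  assume o: "a < b" "b < c" "c < d" and m: "a \<in> F" "c \<in> F" "b \<in> N0" "d \<in> N0"
  have "t0 < a" using gt_t0[OF _ R'P(1)] m Fp(1) by blast
  then have "b \<in> E" using N0_big m o by auto
  then have "c < b" using Fp(3) m by blast
  then show False using o by simp
qed

lemma Psi_nc: "noncrossing (Psi t0 \<alpha> P' l)"
  unfolding nc_iff
proof (intro ballI allI impI)
  fix B1 B2 a b c d
  assume B1: "B1 \<in> Psi t0 \<alpha> P' l" and B2: "B2 \<in> Psi t0 \<alpha> P' l"
    and o: "a < b" "b < c" "c < d" and m: "a \<in> B1" "c \<in> B1" "b \<in> B2" "d \<in> B2"
  show "B1 = B2"
  proof (rule ccontr)
    assume ne12: "B1 \<noteq> B2"
    from B1[unfolded Psi_mem] B2[unfolded Psi_mem] show False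
    proof (elim disjE conjE)
      assume "B1 \<in> P'" "B1 \<noteq> R'" "B2 \<in> P'" "B2 \<noteq> R'"
      then show False using ncP o m ne12 by blast
    next
      assume "B1 \<in> P'" "B1 \<noteq> R'" "B2 = N0" then show False using c1 o m by blast
    next
      assume "B1 \<in> P'" "B1 \<noteq> R'" "B2 = F" then show False using c3 o m by blast
    next
      assume "B1 = N0" "B2 \<in> P'" "B2 \<noteq> R'" then show False using c2 o m by blast
    next
      assume "B1 = N0" "B2 = N0" then show False using ne12 by simp
    next
      assume "B1 = N0" "B2 = F" then show False using c5 o m by blast
    next
      assume "B1 = F" "B2 \<in> P'" "B2 \<noteq> R'" then show False using c4 o m by blast
    next
      assume "B1 = F" "B2 = N0" then show False using c6 o m by blast
    next
      assume "B1 = F" "B2 = F" then show False using ne12 by simp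
    qed
  qed
qed

lemma Psi_dvd: "B \<in> Psi t0 \<alpha> P' l \<Longrightarrow> t0 \<notin> B \<Longrightarrow> k dvd card B"
proof -
  assume B: "B \<in> Psi t0 \<alpha> P' l" and nt: "t0 \<notin> B"
  from B[unfolded Psi_mem] show ?thesis
  proof (elim disjE conjE)
    assume "B \<in> P'" "B \<noteq> R'"
    then show ?thesis using other pp(3) by blast
  next
    assume "B = N0" then show ?thesis using nt t0N0(1) by simp
  next
    assume "B = F" then show ?thesis using Fp(2) kl by simp
  qed
qed

lemma Psi_NCT: "Psi t0 \<alpha> P' l \<in> NCT k T"
  unfolding NCT_T using Psi_part Psi_nc Psi_dvd by blast

lemma Psi_root: "blk (Psi t0 \<alpha> P' l) t0 = N0"
  using blk_eq[OF Psi_part _ t0N0(1)] Psi_mem by blast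

lemma Psi_al: "l \<noteq> 0 \<Longrightarrow> blk (Psi t0 \<alpha> P' l) \<alpha> = F"
  using blk_eq[OF Psi_part _ alF] Psi_mem by blast

lemma finP': "finite P'" using finite_elements[OF basic(6) pp(1)] .

lemma Psi_card: "card (Psi t0 \<alpha> P' l) = card P' + (if l = 0 then 0 else 1)"
proof -
  have c1: "card (P' - {R'}) = card P' - 1" using finP' R'P(1) by simp
  have "P' \<noteq> {}" using R'P(1) by blast
  then have "card P' > 0" using finP' card_gt_0_iff by blast
  then have c0: "card P' \<ge> 1" by simp
  have N: "N0 \<notin> P' - {R'}" using N0_notin by blast
  have c2: "card ((P' - {R'}) \<union> {N0}) = card P'" using c1 c0 N finP' by simp
  show ?thesis
  proof (cases "l = 0")
    case True then show ?thesis unfolding Psi_eq using c2 by simp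
  next
    case False
    have "F \<notin> (P' - {R'}) \<union> {N0}" using F_notin[OF False] NF Fne[OF False] by blast
    then show ?thesis unfolding Psi_eq using c2 False finP' by simp
  qed
qed

lemma Psi_rootcard: "card N0 = card R' - l + 1"
proof -
  have "card E = card R' - l" unfolding E_def using Fp finR by (simp add: card_Diff_subset finF)
  moreover have "finite E" using finR unfolding E_def by simp
  ultimately show ?thesis unfolding N0_def using t0N0(4) by simp
qed

lemma Psi_w: "card {B \<in> Psi t0 \<alpha> P' l. B \<noteq> N0 \<and> card B = q}
   = card {B \<in> P'. B \<noteq> R' \<and> card B = q} + (if l \<noteq> 0 \<and> l = q then 1 else 0)"
proof -
  have fin1: "finite {B \<in> P'. B \<noteq> R' \<and> card B = q}" using finP' by simp
  have nN: "N0 \<notin> P'" by (rule N0_notin)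
  have FN: "F \<noteq> N0" using t0N0 by blast
  have eq: "{B \<in> Psi t0 \<alpha> P' l. B \<noteq> N0 \<and> card B = q} =
     {B \<in> P'. B \<noteq> R' \<and> card B = q} \<union> {B. l \<noteq> 0 \<and> l = q \<and> B = F}"
  proof (rule set_eqI)
    fix B
    show "B \<in> {B \<in> Psi t0 \<alpha> P' l. B \<noteq> N0 \<and> card B = q} \<longleftrightarrow>
          B \<in> {B \<in> P'. B \<noteq> R' \<and> card B = q} \<union> {B. l \<noteq> 0 \<and> l = q \<and> B = F}"
    proof
      assume "B \<in> {B \<in> Psi t0 \<alpha> P' l. B \<noteq> N0 \<and> card B = q}"
      then have B: "B \<in> Psi t0 \<alpha> P' l" "B \<noteq> N0" "card B = q" by auto
      from B(1)[unfolded Psi_mem] show "B \<in> {B \<in> P'. B \<noteq> R' \<and> card B = q} \<union> {B. l \<noteq> 0 \<and> l = q \<and> B = F}"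
      proof (elim disjE conjE)
        assume "B \<in> P'" "B \<noteq> R'" then show ?thesis using B by simp
      next
        assume "B = N0" then show ?thesis using B by simp
      next
        assume "l \<noteq> 0" "B = F" then show ?thesis using B Fp(2) by simp
      qed
    next
      assume "B \<in> {B \<in> P'. B \<noteq> R' \<and> card B = q} \<union> {B. l \<noteq> 0 \<and> l = q \<and> B = F}"
      then show "B \<in> {B \<in> Psi t0 \<alpha> P' l. B \<noteq> N0 \<and> card B = q}"
      proof
        assume "B \<in> {B \<in> P'. B \<noteq> R' \<and> card B = q}"
        then have "B \<in> P'" "B \<noteq> R'" "card B = q" by auto
        moreover have "B \<noteq> N0" using nN \<open>B \<in> P'\<close> by blast
        ultimately show ?thesis unfolding mem_Collect_eq Psi_mem by blast
      next
        assume "B \<in> {B. l \<noteq> 0 \<and> l = q \<and> B = F}"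
        then have "l \<noteq> 0" "l = q" "B = F" by auto
        then show ?thesis unfolding mem_Collect_eq Psi_mem using FN Fp(2) by blast
      qed
    qed
  qed
  show ?thesis
  proof (cases "l \<noteq> 0 \<and> l = q")
    case True
    then have e2: "{B. l \<noteq> 0 \<and> l = q \<and> B = F} = {F}" by auto
    have "F \<notin> {B \<in> P'. B \<noteq> R' \<and> card B = q}" using F_notin True by blast
    then show ?thesis unfolding eq e2 using True fin1 by simp
  next
    case False
    then have e2: "{B. l \<noteq> 0 \<and> l = q \<and> B = F} = {}" by auto
    show ?thesis unfolding eq e2 using False by simp
  qed
qed

end


lemma nc_mono:
  assumes nc: "noncrossing P" and g: "\<And>X. X \<in> Q \<Longrightarrow> g X \<in> P \<and> X \<subseteq> g X" and inj: "inj_on g Q"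
  shows "noncrossing Q"
  unfolding nc_iff
proof (intro ballI allI impI)
  fix B1 B2 a b c d
  assume B: "B1 \<in> Q" "B2 \<in> Q" and o: "a < b" "b < c" "c < d" and m: "a \<in> B1" "c \<in> B1" "b \<in> B2" "d \<in> B2"
  have "g B1 = g B2"
  proof (rule ncE[OF nc _ _ o])
    show "g B1 \<in> P" "g B2 \<in> P" using g B by auto
    show "a \<in> g B1" "c \<in> g B1" "b \<in> g B2" "d \<in> g B2" using g B m by blast+
  qed
  then show "B1 = B2" using inj B by (simp add: inj_on_eq_iff)
qed

locale philoc = setp +
  fixes P :: "nat set set"
  assumes P: "P \<in> NCT k T"
begin

definition "R = blk P t0"
definition "Ba = blk P \<alpha>"
definition "M = (R - {t0}) \<union> Ba"

lemma pp: "partition_on T P" "noncrossing P" "\<And>B. B \<in> P \<Longrightarrow> t0 \<notin> B \<Longrightarrow> k dvd card B"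
  using P NCT_T by auto

lemma RP: "R \<in> P" "t0 \<in> R" using blk[OF pp(1) basic(1)] R_def by auto
lemma alT: "\<alpha> \<in> T" using basic(2,7) by blast
lemma BaP: "Ba \<in> P" "\<alpha> \<in> Ba" using blk[OF pp(1) alT] Ba_def by auto

lemma inT: "X \<in> P \<Longrightarrow> X \<subseteq> T" using partE(1)[OF pp(1)] by blast
lemma disj: "X \<in> P \<Longrightarrow> Y \<in> P \<Longrightarrow> X \<noteq> Y \<Longrightarrow> X \<inter> Y = {}" using partE(2)[OF pp(1)] by blast
lemma finP: "finite P" using finite_elements[OF fin pp(1)] .
lemma finX: "X \<in> P \<Longrightarrow> finite X" using inT fin finite_subset by blast

lemma t0_notin: "X \<in> P \<Longrightarrow> X \<noteq> R \<Longrightarrow> t0 \<notin> X" using disj RP by blast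
lemma gt: "X \<in> P \<Longrightarrow> X \<noteq> R \<Longrightarrow> x \<in> X \<Longrightarrow> t0 < x"
proof -
  assume X: "X \<in> P" "X \<noteq> R" "x \<in> X"
  then have "x \<in> T" "x \<noteq> t0" using inT t0_notin by blast+
  then show "t0 < x" using basic(8)[of x] by simp
qed
lemma inT': "X \<in> P \<Longrightarrow> x \<in> X \<Longrightarrow> x \<noteq> t0 \<Longrightarrow> x \<in> T'" using inT basic(7) by blast

definition "P1 = (P - {R}) \<union> {R - {t0}}"

lemma P1_mem: "X \<in> P1 \<longleftrightarrow> (X \<in> P \<and> X \<noteq> R) \<or> X = R - {t0}"
  unfolding P1_def by blast

context assumes aR: "\<alpha> \<in> R"
begin

lemma P1_part: "partition_on T' P1"
  unfolding part_iff
proof (intro conjI)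
  show "\<Union>P1 = T'"
  proof
    show "\<Union>P1 \<subseteq> T'"
    proof
      fix x assume "x \<in> \<Union>P1"
      then obtain X where X: "X \<in> P1" "x \<in> X" by blast
      from X(1)[unfolded P1_mem] show "x \<in> T'"
      proof
        assume "X \<in> P \<and> X \<noteq> R" then show ?thesis using X(2) inT' t0_notin by blast
      next
        assume "X = R - {t0}" then show ?thesis using X(2) inT' RP by blast
      qed
    qed
    show "T' \<subseteq> \<Union>P1"
    proof
      fix x assume x: "x \<in> T'"
      then have "x \<in> T" "x \<noteq> t0" using basic(7,3) by blast+
      then obtain X where X: "X \<in> P" "x \<in> X" using partE(1)[OF pp(1)] by blast
      show "x \<in> \<Union>P1"
      proof (cases "X = R")
        case True then have "x \<in> R - {t0}" using X \<open>x \<noteq> t0\<close> by simp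
        then show ?thesis using P1_mem by blast
      next
        case False then show ?thesis using X P1_mem by blast
      qed
    qed
  qed
next
  show "\<forall>p\<in>P1. \<forall>q\<in>P1. p \<noteq> q \<longrightarrow> p \<inter> q = {}"
  proof (intro ballI impI)
    fix p q assume p: "p \<in> P1" and q: "q \<in> P1" and pq: "p \<noteq> q"
    from p[unfolded P1_mem] q[unfolded P1_mem] pq show "p \<inter> q = {}"
    proof (elim disjE conjE)
      assume "p \<in> P" "p \<noteq> R" "q \<in> P" "q \<noteq> R" then show ?thesis using disj pq by blast
    next
      assume "p \<in> P" "p \<noteq> R" "q = R - {t0}" then show ?thesis using disj RP by blast
    next
      assume "p = R - {t0}" "q \<in> P" "q \<noteq> R" then show ?thesis using disj RP by blast
    next
      assume "p = R - {t0}" "q = R - {t0}" then show ?thesis using pq by simp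
    qed
  qed
next
  show "{} \<notin> P1" unfolding P1_mem using partE(3)[OF pp(1)] aR basic(2,3) by blast
qed

lemma P1_nc: "noncrossing P1"
proof (rule nc_mono[OF pp(2), of P1 "\<lambda>X. if X = R - {t0} then R else X"])
  fix X assume "X \<in> P1"
  then show "(if X = R - {t0} then R else X) \<in> P \<and> X \<subseteq> (if X = R - {t0} then R else X)"
    unfolding P1_mem using RP by auto
next
  have RnP1: "R \<notin> P1" unfolding P1_mem using RP by auto
  show "inj_on (\<lambda>X. if X = R - {t0} then R else X) P1"
    unfolding inj_on_def using RnP1 by auto
qed

lemma P1_NCT: "P1 \<in> NCT k T'"
  unfolding NCT_T'
proof (intro conjI ballI impI)
  show "partition_on T' P1" by (rule P1_part)
  show "noncrossing P1" by (rule P1_nc)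
  fix B assume B: "B \<in> P1" "\<alpha> \<notin> B"
  then have "B \<in> P" "B \<noteq> R" unfolding P1_mem using aR basic(2,3) by auto
  then show "k dvd card B" using pp(3) t0_notin by blast
qed

lemma P1_root: "blk P1 \<alpha> = R - {t0}"
  using blk_eq[OF P1_part _ ] P1_mem aR basic(2,3) by blast

lemma Psi_P1: "Psi t0 \<alpha> P1 0 = P"
proof -
  have fs: "fst_seg (R - {t0}) 0 = {}" unfolding fst_seg_def by simp
  have nin: "R - {t0} \<notin> P - {R}"
  proof
    assume "R - {t0} \<in> P - {R}"
    then have "(R - {t0}) \<inter> R = {}" using disj RP by blast
    then show False using aR basic(2,3) by blast
  qed
  have "P1 - {R - {t0}} = P - {R}" unfolding P1_def using nin by blast
  moreover have "insert t0 (R - {t0}) = R" using RP by blast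
  ultimately show ?thesis unfolding Psi_def P1_root fs using RP by auto
qed

lemma Phi_in: "Phi t0 \<alpha> P = (P1, 0)"
  unfolding Phi_def P1_def using aR R_def by simp

end


definition "P2 = (P - {R, Ba}) \<union> {M}"

lemma P2_mem: "X \<in> P2 \<longleftrightarrow> (X \<in> P \<and> X \<noteq> R \<and> X \<noteq> Ba) \<or> X = M"
  unfolding P2_def by blast

context assumes naR: "\<alpha> \<notin> R"
begin

lemma BR: "Ba \<noteq> R" using naR BaP by blast
lemma t0B: "t0 \<notin> Ba" using t0_notin BaP BR by blast
lemma BRd: "Ba \<inter> R = {}" using disj BaP RP BR by blast

lemma key: "x \<in> Ba \<Longrightarrow> y \<in> R \<Longrightarrow> y \<noteq> t0 \<Longrightarrow> x < y"
proof (rule ccontr)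
  assume x: "x \<in> Ba" and y: "y \<in> R" "y \<noteq> t0" and n: "\<not> x < y"
  have "x \<noteq> y" using x y BRd by blast
  then have yx: "y < x" using n by simp
  have "y \<in> T'" using inT' RP y by blast
  then have "\<alpha> \<le> y" using basic(5) by blast
  moreover have "\<alpha> \<noteq> y" using y BaP BRd by blast
  ultimately have ay: "\<alpha> < y" by simp
  have ty: "t0 < \<alpha>" using basic(4,2) by blast
  have "R = Ba" using ncE[OF pp(2) RP(1) BaP(1) ty ay yx RP(2) y(1) BaP(2) x] .
  then show False using BR by simp
qed

lemma M_mem: "x \<in> M \<longleftrightarrow> (x \<in> R \<and> x \<noteq> t0) \<or> x \<in> Ba" unfolding M_def by blast

lemma P2_part: "partition_on T' P2"
  unfolding part_iff
proof (intro conjI)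
  show "\<Union>P2 = T'"
  proof
    show "\<Union>P2 \<subseteq> T'"
    proof
      fix x assume "x \<in> \<Union>P2"
      then obtain X where X: "X \<in> P2" "x \<in> X" by blast
      from X(1)[unfolded P2_mem] show "x \<in> T'"
      proof
        assume "X \<in> P \<and> X \<noteq> R \<and> X \<noteq> Ba" then show ?thesis using X(2) inT' t0_notin by blast
      next
        assume "X = M"
        then have "(x \<in> R \<and> x \<noteq> t0) \<or> x \<in> Ba" using X(2) M_mem by blast
        then show ?thesis using inT' RP BaP t0B by blast
      qed
    qed
    show "T' \<subseteq> \<Union>P2"
    proof
      fix x assume x: "x \<in> T'"
      then have "x \<in> T" "x \<noteq> t0" using basic(7,3) by blast+
      then obtain X where X: "X \<in> P" "x \<in> X" using partE(1)[OF pp(1)] by blast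
      show "x \<in> \<Union>P2"
      proof (cases "X = R \<or> X = Ba")
        case True then have "x \<in> M" using X \<open>x \<noteq> t0\<close> M_mem by blast
        then show ?thesis using P2_mem by blast
      next
        case False then show ?thesis using X P2_mem by blast
      qed
    qed
  qed
next
  show "\<forall>p\<in>P2. \<forall>q\<in>P2. p \<noteq> q \<longrightarrow> p \<inter> q = {}"
  proof (intro ballI impI)
    fix p q assume p: "p \<in> P2" and q: "q \<in> P2" and pq: "p \<noteq> q"
    have XM: "X \<inter> M = {}" if "X \<in> P" "X \<noteq> R" "X \<noteq> Ba" for X
      using disj[OF that(1) RP(1) that(2)] disj[OF that(1) BaP(1) that(3)] unfolding M_def by blast
    from p[unfolded P2_mem] q[unfolded P2_mem] pq show "p \<inter> q = {}"
    proof (elim disjE conjE)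
      assume "p \<in> P" "p \<noteq> R" "p \<noteq> Ba" "q \<in> P" "q \<noteq> R" "q \<noteq> Ba" then show ?thesis using disj pq by blast
    next
      assume "p \<in> P" "p \<noteq> R" "p \<noteq> Ba" "q = M" then show ?thesis using XM by blast
    next
      assume "p = M" "q \<in> P" "q \<noteq> R" "q \<noteq> Ba" then show ?thesis using XM by blast
    next
      assume "p = M" "q = M" then show ?thesis using pq by simp
    qed
  qed
next
  show "{} \<notin> P2" unfolding P2_mem using partE(3)[OF pp(1)] BaP M_mem by blast
qed

lemma nc1: "X \<in> P \<Longrightarrow> X \<noteq> R \<Longrightarrow> X \<noteq> Ba \<Longrightarrow> a < b \<Longrightarrow> b < c \<Longrightarrow> c < d \<Longrightarrow> a \<in> M \<Longrightarrow> c \<in> M \<Longrightarrow> b \<in> X \<Longrightarrow> d \<in> X \<Longrightarrow> False"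
proof -
  assume X: "X \<in> P" "X \<noteq> R" "X \<noteq> Ba" and o: "a < b" "b < c" "c < d" and m: "a \<in> M" "c \<in> M" "b \<in> X" "d \<in> X"
  have tb: "t0 < b" using gt X m by blast
  from m(1)[unfolded M_mem] m(2)[unfolded M_mem] show False
  proof (elim disjE conjE)
    assume "a \<in> R" "c \<in> R" then show False using ncE[OF pp(2) RP(1) X(1) o] m X by blast
  next
    assume "a \<in> R" "a \<noteq> t0" "c \<in> Ba" then show False using key o by fastforce
  next
    assume "a \<in> Ba" "c \<in> R" "c \<noteq> t0"
    have "R = X" using ncE[OF pp(2) RP(1) X(1) tb o(2,3) RP(2) \<open>c \<in> R\<close> m(3,4)] .
    then show False using X by simp
  next
    assume "a \<in> Ba" "c \<in> Ba" then show False using ncE[OF pp(2) BaP(1) X(1) o] m X by blast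
  qed
qed

lemma nc2: "X \<in> P \<Longrightarrow> X \<noteq> R \<Longrightarrow> X \<noteq> Ba \<Longrightarrow> a < b \<Longrightarrow> b < c \<Longrightarrow> c < d \<Longrightarrow> a \<in> X \<Longrightarrow> c \<in> X \<Longrightarrow> b \<in> M \<Longrightarrow> d \<in> M \<Longrightarrow> False"
proof -
  assume X: "X \<in> P" "X \<noteq> R" "X \<noteq> Ba" and o: "a < b" "b < c" "c < d" and m: "a \<in> X" "c \<in> X" "b \<in> M" "d \<in> M"
  from m(3)[unfolded M_mem] m(4)[unfolded M_mem] show False
  proof (elim disjE conjE)
    assume "b \<in> R" "d \<in> R" then show False using ncE[OF pp(2) X(1) RP(1) o] m X by blast
  next
    assume "b \<in> R" "b \<noteq> t0" "d \<in> Ba" then show False using key o by fastforce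
  next
    assume b: "b \<in> Ba" and d: "d \<in> R" "d \<noteq> t0"
    have "a \<in> T'" using inT' X m t0_notin by blast
    then have "\<alpha> \<le> a" using basic(5) by blast
    moreover have "\<alpha> \<noteq> a" using disj[OF X(1) BaP(1) X(3)] BaP m by blast
    ultimately have aa: "\<alpha> < a" by simp
    have "Ba = X" using ncE[OF pp(2) BaP(1) X(1) aa o(1,2) BaP(2) b m(1,2)] .
    then show False using X by simp
  next
    assume "b \<in> Ba" "d \<in> Ba" then show False using ncE[OF pp(2) X(1) BaP(1) o] m X by blast
  qed
qed

lemma P2_nc: "noncrossing P2"
  unfolding nc_iff
proof (intro ballI allI impI)
  fix B1 B2 a b c d
  assume B1: "B1 \<in> P2" and B2: "B2 \<in> P2"
    and o: "a < b" "b < c" "c < d" and m: "a \<in> B1" "c \<in> B1" "b \<in> B2" "d \<in> B2"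
  show "B1 = B2"
  proof (rule ccontr)
    assume ne12: "B1 \<noteq> B2"
    from B1[unfolded P2_mem] B2[unfolded P2_mem] show False
    proof (elim disjE conjE)
      assume "B1 \<in> P" "B2 \<in> P" then show False using ncE[OF pp(2) _ _ o] m ne12 by blast
    next
      assume "B1 \<in> P" "B1 \<noteq> R" "B1 \<noteq> Ba" "B2 = M" then show False using nc2 o m by blast
    next
      assume "B1 = M" "B2 \<in> P" "B2 \<noteq> R" "B2 \<noteq> Ba" then show False using nc1 o m by blast
    next
      assume "B1 = M" "B2 = M" then show False using ne12 by simp
    qed
  qed
qed

lemma P2_NCT: "P2 \<in> NCT k T'"
  unfolding NCT_T'
proof (intro conjI ballI impI)
  show "partition_on T' P2" by (rule P2_part)
  show "noncrossing P2" by (rule P2_nc)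
  fix B assume B: "B \<in> P2" "\<alpha> \<notin> B"
  then have "B \<in> P" "B \<noteq> R" unfolding P2_mem using BaP M_mem by auto
  then show "k dvd card B" using pp(3) t0_notin by blast
qed

lemma P2_root: "blk P2 \<alpha> = M"
  using blk_eq[OF P2_part _ ] P2_mem BaP M_mem by blast

lemma kB: "k dvd card Ba" using pp(3) BaP t0B by blast

lemma finM: "finite M" unfolding M_def using finX RP BaP by blast

lemma BM: "card Ba \<le> card M" using finM by (intro card_mono) (auto simp: M_def)

lemma Psi_P2: "Psi t0 \<alpha> P2 (card Ba) = P"
proof -
  have BsM: "Ba \<subseteq> M" unfolding M_def by blast
  have fs: "fst_seg M (card Ba) = Ba"
  proof (rule seg_unique[OF finM BsM])
    show "\<forall>x\<in>Ba. \<forall>y\<in>M - Ba. x < y" using key M_mem by blast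
  qed
  have E: "M - Ba = R - {t0}" unfolding M_def using BRd by blast
  have N: "insert t0 (R - {t0}) = R" using RP by blast
  have c0: "card Ba \<noteq> 0" using finX BaP by auto
  have nin: "M \<notin> P - {R, Ba}"
  proof
    assume "M \<in> P - {R, Ba}"
    then have "M \<inter> Ba = {}" using disj BaP by blast
    then show False using BaP M_mem by blast
  qed
  have P2M: "P2 - {M} = P - {R, Ba}" unfolding P2_def using nin by blast
  show ?thesis unfolding Psi_def P2_root fs E N P2M using c0 RP BaP by auto
qed

lemma Phi_out: "Phi t0 \<alpha> P = (P2, card Ba)"
  unfolding Phi_def P2_def M_def using naR R_def Ba_def by simp

end

end

context psiloc
begin

lemma Phi_Psi: "Phi t0 \<alpha> (Psi t0 \<alpha> P' l) = (P', l)"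
proof (cases "l = 0")
  case True
  have F: "F = {}" using F0 True .
  have aN: "\<alpha> \<in> N0" using alN0 True by simp
  have Q: "Psi t0 \<alpha> P' l = (P' - {R'}) \<union> {N0}" using Psi_eq True by simp
  have QN: "(P' - {R'}) \<union> {N0} - {N0} = P' - {R'}" using N0_notin by blast
  have NE: "N0 - {t0} = R'" unfolding N0_def E_def F using t0N0(3) by blast
  have "(P' - {R'}) \<union> {R'} = P'" using R'P(1) by blast
  then show ?thesis unfolding Phi_def Psi_root using aN Q QN NE True by simp
next
  case False
  have aN: "\<alpha> \<notin> N0" using alN0 False by simp
  have Q: "Psi t0 \<alpha> P' l = (P' - {R'}) \<union> {N0} \<union> {F}" using Psi_eq False by simp
  have QN: "(P' - {R'}) \<union> {N0} \<union> {F} - {N0, F} = P' - {R'}" using N0_notin F_notin[OF False] by blast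
  have NE: "(N0 - {t0}) \<union> F = R'" unfolding N0_def E_def using t0N0(3) Fp(1) by blast
  have "(P' - {R'}) \<union> {R'} = P'" using R'P(1) by blast
  then show ?thesis unfolding Phi_def Psi_root Psi_al[OF False] using aN Q QN NE Fp(2) by simp
qed

end


context setp
begin

definition "Dom = Sigma (NCT k T') (\<lambda>P'. {j. j*k \<le> card (blk P' \<alpha>)})"

lemma bij_main:
  assumes k: "k > 0"
  shows "bij_betw (\<lambda>(P', j). Psi t0 \<alpha> P' (j*k)) Dom (NCT k T)"
proof (rule bij_betw_byWitness[where f' = "\<lambda>P. (fst (Phi t0 \<alpha> P), snd (Phi t0 \<alpha> P) div k)"])
  show "\<forall>a\<in>Dom. (\<lambda>P. (fst (Phi t0 \<alpha> P), snd (Phi t0 \<alpha> P) div k)) ((\<lambda>(P', j). Psi t0 \<alpha> P' (j * k)) a) = a"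
  proof
    fix x assume "x \<in> Dom"
    then obtain P' j where x: "x = (P', j)" "P' \<in> NCT k T'" "j*k \<le> card (blk P' \<alpha>)" unfolding Dom_def by blast
    interpret psiloc k T T' t0 \<alpha> P' "j*k"
      by unfold_locales (use x in simp_all)
    show "(\<lambda>P. (fst (Phi t0 \<alpha> P), snd (Phi t0 \<alpha> P) div k)) ((\<lambda>(P', j). Psi t0 \<alpha> P' (j * k)) x) = x"
      using Phi_Psi x(1) k by simp
  qed
  show "\<forall>a'\<in>NCT k T. (\<lambda>(P', j). Psi t0 \<alpha> P' (j * k)) ((\<lambda>P. (fst (Phi t0 \<alpha> P), snd (Phi t0 \<alpha> P) div k)) a') = a'"
  proof
    fix P assume P: "P \<in> NCT k T"
    interpret philoc k T T' t0 \<alpha> P by unfold_locales (rule P)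
    show "(\<lambda>(P', j). Psi t0 \<alpha> P' (j * k)) ((\<lambda>P. (fst (Phi t0 \<alpha> P), snd (Phi t0 \<alpha> P) div k)) P) = P"
    proof (cases "\<alpha> \<in> R")
      case True then show ?thesis using Phi_in Psi_P1 by simp
    next
      case False
      have "card Ba div k * k = card Ba" using kB[OF False] by simp
      then show ?thesis using Phi_out[OF False] Psi_P2[OF False] by simp
    qed
  qed
  show "(\<lambda>(P', j). Psi t0 \<alpha> P' (j * k)) ` Dom \<subseteq> NCT k T"
  proof
    fix Q assume "Q \<in> (\<lambda>(P', j). Psi t0 \<alpha> P' (j * k)) ` Dom"
    then obtain y where y: "y \<in> Dom" "Q = (\<lambda>(P', j). Psi t0 \<alpha> P' (j * k)) y" by blast
    obtain P' j where yy: "y = (P', j)" by (cases y)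
    have x: "Q = Psi t0 \<alpha> P' (j*k)" "P' \<in> NCT k T'" "j*k \<le> card (blk P' \<alpha>)"
      using y unfolding yy Dom_def by auto
    interpret psiloc k T T' t0 \<alpha> P' "j*k"
      by unfold_locales (use x in simp_all)
    show "Q \<in> NCT k T" using Psi_NCT x(1) by simp
  qed
  show "(\<lambda>P. (fst (Phi t0 \<alpha> P), snd (Phi t0 \<alpha> P) div k)) ` NCT k T \<subseteq> Dom"
  proof
    fix x assume "x \<in> (\<lambda>P. (fst (Phi t0 \<alpha> P), snd (Phi t0 \<alpha> P) div k)) ` NCT k T"
    then obtain P where P: "P \<in> NCT k T" and x: "x = (fst (Phi t0 \<alpha> P), snd (Phi t0 \<alpha> P) div k)" by blast
    interpret philoc k T T' t0 \<alpha> P by unfold_locales (rule P)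
    show "x \<in> Dom"
    proof (cases "\<alpha> \<in> R")
      case True then show ?thesis using Phi_in P1_NCT x unfolding Dom_def by simp
    next
      case False
      have "card Ba div k * k = card Ba" using kB[OF False] by simp
      then show ?thesis using Phi_out[OF False] P2_NCT[OF False] P2_root[OF False] BM[OF False] x unfolding Dom_def by simp
    qed
  qed
qed

lemma finNCT: "finite A \<Longrightarrow> finite (NCT k A)"
proof -
  assume "finite A"
  then have "finite {P. partition_on A P}" by (rule finitely_many_partition_on)
  then show ?thesis unfolding NCT_def by (rule rev_finite_subset) auto
qed

lemma sum_decomp:
  assumes k: "k > 0"
  shows "(\<Sum>P\<in>NCT k T. f P) = (\<Sum>P'\<in>NCT k T'. \<Sum>j\<in>{j. j*k \<le> card (blk P' \<alpha>)}. f (Psi t0 \<alpha> P' (j*k)))"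
proof -
  have "(\<Sum>P\<in>NCT k T. f P) = (\<Sum>x\<in>Dom. f ((\<lambda>(P', j). Psi t0 \<alpha> P' (j*k)) x))"
    using sum.reindex_bij_betw[OF bij_main[OF k], of f] by simp
  also have "\<dots> = (\<Sum>x\<in>Dom. (\<lambda>(P', j). f (Psi t0 \<alpha> P' (j*k))) x)"
    by (rule sum.cong) (auto split: prod.splits)
  also have "\<dots> = (\<Sum>P'\<in>NCT k T'. \<Sum>j\<in>{j. j*k \<le> card (blk P' \<alpha>)}. f (Psi t0 \<alpha> P' (j*k)))"
    unfolding Dom_def
  proof (rule sum.Sigma[symmetric])
    show "finite (NCT k T')" using finNCT basic(6) by blast
    show "\<forall>P'\<in>NCT k T'. finite {j. j * k \<le> card (blk P' \<alpha>)}"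
    proof
      fix P' :: "nat set set"
      have "{j. j * k \<le> card (blk P' \<alpha>)} \<subseteq> {..card (blk P' \<alpha>)}"
      proof
        fix j assume "j \<in> {j. j * k \<le> card (blk P' \<alpha>)}"
        then have "j * k \<le> card (blk P' \<alpha>)" by simp
        moreover have "j \<le> j * k" using k by simp
        ultimately have "j \<le> card (blk P' \<alpha>)" by (rule order.trans[rotated])
        then show "j \<in> {..card (blk P' \<alpha>)}" by simp
      qed
      then show "finite {j. j * k \<le> card (blk P' \<alpha>)}" by (rule finite_subset) simp
    qed
  qed
  finally show ?thesis .
qed

end


lemma jsum:
  fixes \<phi> :: "nat \<Rightarrow> nat" and k r N s cP c :: nat
  assumes k: "k > 0" and r: "1 \<le> r" "r < N" and s: "s \<ge> 1"
  shows "(\<Sum>j\<in>{j. j*k \<le> r}. if r - j*k + 1 = s \<and> cP + (if j = 0 then 0 else 1) = c then \<phi> j else 0)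
    = (if s \<ge> 2 \<and> r = s - 1 \<and> cP = c then \<phi> 0 else 0)
      + (if c \<ge> 1 then (\<Sum>j\<in>{1..N}. if r = s - 1 + j*k \<and> cP = c - 1 then \<phi> j else 0) else 0)"
proof -
  have ins: "{j. j*k \<le> r} = insert 0 {j\<in>{1..N}. j*k \<le> r}"
  proof (rule set_eqI)
    fix j
    show "j \<in> {j. j*k \<le> r} \<longleftrightarrow> j \<in> insert 0 {j\<in>{1..N}. j*k \<le> r}"
    proof
      assume "j \<in> {j. j*k \<le> r}"
      then have jk: "j*k \<le> r" by simp
      have "j \<le> j*k" using k by simp
      then have "j \<le> N" using jk r by linarith
      then show "j \<in> insert 0 {j\<in>{1..N}. j*k \<le> r}" using jk by auto
    qed auto
  qed
  have fin: "finite {j\<in>{1..N}. j*k \<le> r}" by simp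
  have "(\<Sum>j\<in>{j. j*k \<le> r}. if r - j*k + 1 = s \<and> cP + (if j = 0 then 0 else 1) = c then \<phi> j else 0)
     = (if r + 1 = s \<and> cP = c then \<phi> 0 else 0) +
       (\<Sum>j\<in>{j\<in>{1..N}. j*k \<le> r}. if r - j*k + 1 = s \<and> cP + (if j = 0 then 0 else 1) = c then \<phi> j else 0)"
    unfolding ins by (subst sum.insert[OF fin]) auto
  also have "(if r + 1 = s \<and> cP = c then \<phi> 0 else 0) = (if s \<ge> 2 \<and> r = s - 1 \<and> cP = c then \<phi> 0 else 0)"
    using r s by auto
  also have "(\<Sum>j\<in>{j\<in>{1..N}. j*k \<le> r}. if r - j*k + 1 = s \<and> cP + (if j = 0 then 0 else 1) = c then \<phi> j else 0)
     = (\<Sum>j\<in>{1..N}. if j*k \<le> r then (if r - j*k + 1 = s \<and> cP + (if j = 0 then 0 else 1) = c then \<phi> j else 0) else 0)"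
    by (rule sum.inter_filter) simp
  also have "\<dots> = (\<Sum>j\<in>{1..N}. if c \<ge> 1 then (if r = s - 1 + j*k \<and> cP = c - 1 then \<phi> j else 0) else 0)"
  proof (rule sum.cong)
    fix j assume j: "j \<in> {1..N}"
    show "(if j*k \<le> r then (if r - j*k + 1 = s \<and> cP + (if j = 0 then 0 else 1) = c then \<phi> j else 0) else 0)
      = (if c \<ge> 1 then (if r = s - 1 + j*k \<and> cP = c - 1 then \<phi> j else 0) else 0)"
      using j s by auto
  qed simp
  also have "\<dots> = (if c \<ge> 1 then (\<Sum>j\<in>{1..N}. if r = s - 1 + j*k \<and> cP = c - 1 then \<phi> j else 0) else 0)"
    by simp
  finally show ?thesis .
qed

definition Gs :: "nat \<Rightarrow> nat set \<Rightarrow> nat \<Rightarrow> nat \<Rightarrow> nat" where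
  "Gs k T s c = (\<Sum>P\<in>NCT k T. if card (blk P (Min T)) = s \<and> card P = c then 1 else 0)"

definition Hs :: "nat \<Rightarrow> nat \<Rightarrow> nat set \<Rightarrow> nat \<Rightarrow> nat \<Rightarrow> nat" where
  "Hs k u T s c = (\<Sum>P\<in>NCT k T. if card (blk P (Min T)) = s \<and> card P = c
       then card {B\<in>P. B \<noteq> blk P (Min T) \<and> card B = u*k} else 0)"

context setp
begin

lemma root_bounds: "P' \<in> NCT k T' \<Longrightarrow> 1 \<le> card (blk P' \<alpha>) \<and> card (blk P' \<alpha>) < card T"
proof -
  assume P': "P' \<in> NCT k T'"
  have p: "partition_on T' P'" using P' NCT_T' by simp
  have b: "blk P' \<alpha> \<in> P'" "\<alpha> \<in> blk P' \<alpha>" using blk[OF p basic(2)] by auto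
  have sub: "blk P' \<alpha> \<subseteq> T'" using partE(1)[OF p] b by blast
  then have fb: "finite (blk P' \<alpha>)" using basic(6) finite_subset by blast
  have "card (blk P' \<alpha>) \<le> card T'" using card_mono[OF basic(6) sub] .
  also have "card T' < card T" using basic(1,3,6,7) by simp
  finally have "card (blk P' \<alpha>) < card T" .
  moreover have "card (blk P' \<alpha>) \<ge> 1" using fb b(2) by (metis One_nat_def Suc_leI card_gt_0_iff empty_iff)
  ultimately show ?thesis by simp
qed

lemma perP:
  assumes k: "k > 0" and P': "P' \<in> NCT k T'" and jk: "j*k \<le> card (blk P' \<alpha>)"
  shows "card (blk (Psi t0 \<alpha> P' (j*k)) t0) = card (blk P' \<alpha>) - j*k + 1"
    "card (Psi t0 \<alpha> P' (j*k)) = card P' + (if j = 0 then 0 else 1)"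
    "card {B \<in> Psi t0 \<alpha> P' (j*k). B \<noteq> blk (Psi t0 \<alpha> P' (j*k)) t0 \<and> card B = u*k}
      = card {B \<in> P'. B \<noteq> blk P' \<alpha> \<and> card B = u*k} + (if j \<noteq> 0 \<and> j = u then 1 else 0)"
proof -
  interpret psiloc k T T' t0 \<alpha> P' "j*k" by unfold_locales (use P' jk in simp_all)
  show "card (blk (Psi t0 \<alpha> P' (j*k)) t0) = card (blk P' \<alpha>) - j*k + 1"
    using Psi_root Psi_rootcard R'_def by simp
  show "card (Psi t0 \<alpha> P' (j*k)) = card P' + (if j = 0 then 0 else 1)"
    using Psi_card k by simp
  show "card {B \<in> Psi t0 \<alpha> P' (j*k). B \<noteq> blk (Psi t0 \<alpha> P' (j*k)) t0 \<and> card B = u*k}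
      = card {B \<in> P'. B \<noteq> blk P' \<alpha> \<and> card B = u*k} + (if j \<noteq> 0 \<and> j = u then 1 else 0)"
    using Psi_w[of "u*k"] Psi_root R'_def k by simp
qed

lemma MinT: "Min T = t0" using t0 by simp
lemma MinT': "Min T' = \<alpha>" using al by simp

lemma gen_rec:
  fixes w :: "nat set set \<Rightarrow> nat" and v :: "nat set set \<Rightarrow> nat \<Rightarrow> nat"
  assumes k: "k > 0" and s: "s \<ge> 1"
    and wv: "\<And>P' j. P' \<in> NCT k T' \<Longrightarrow> j*k \<le> card (blk P' \<alpha>) \<Longrightarrow> w (Psi t0 \<alpha> P' (j*k)) = v P' j"
  shows "(\<Sum>P\<in>NCT k T. if card (blk P t0) = s \<and> card P = c then w P else 0)
    = (\<Sum>P'\<in>NCT k T'. (if s \<ge> 2 \<and> card (blk P' \<alpha>) = s - 1 \<and> card P' = c then v P' 0 else 0)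
      + (if c \<ge> 1 then (\<Sum>j\<in>{1..card T}. if card (blk P' \<alpha>) = s - 1 + j*k \<and> card P' = c - 1 then v P' j else 0) else 0))"
proof -
  have "(\<Sum>P\<in>NCT k T. if card (blk P t0) = s \<and> card P = c then w P else 0)
    = (\<Sum>P'\<in>NCT k T'. \<Sum>j\<in>{j. j*k \<le> card (blk P' \<alpha>)}.
         if card (blk (Psi t0 \<alpha> P' (j*k)) t0) = s \<and> card (Psi t0 \<alpha> P' (j*k)) = c then w (Psi t0 \<alpha> P' (j*k)) else 0)"
    by (rule sum_decomp[OF k])
  also have "\<dots> = (\<Sum>P'\<in>NCT k T'. \<Sum>j\<in>{j. j*k \<le> card (blk P' \<alpha>)}.
         if card (blk P' \<alpha>) - j*k + 1 = s \<and> card P' + (if j = 0 then 0 else 1) = c then v P' j else 0)"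
  proof (rule sum.cong[OF refl], rule sum.cong[OF refl])
    fix P' j assume P': "P' \<in> NCT k T'" and j: "j \<in> {j. j*k \<le> card (blk P' \<alpha>)}"
    then have jk: "j*k \<le> card (blk P' \<alpha>)" by simp
    show "(if card (blk (Psi t0 \<alpha> P' (j*k)) t0) = s \<and> card (Psi t0 \<alpha> P' (j*k)) = c then w (Psi t0 \<alpha> P' (j*k)) else 0)
      = (if card (blk P' \<alpha>) - j*k + 1 = s \<and> card P' + (if j = 0 then 0 else 1) = c then v P' j else 0)"
      using perP(1,2)[OF k P' jk] wv[OF P' jk] by simp
  qed
  also have "\<dots> = (\<Sum>P'\<in>NCT k T'. (if s \<ge> 2 \<and> card (blk P' \<alpha>) = s - 1 \<and> card P' = c then v P' 0 else 0)
      + (if c \<ge> 1 then (\<Sum>j\<in>{1..card T}. if card (blk P' \<alpha>) = s - 1 + j*k \<and> card P' = c - 1 then v P' j else 0) else 0))"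
  proof (rule sum.cong[OF refl])
    fix P' assume P': "P' \<in> NCT k T'"
    show "(\<Sum>j\<in>{j. j*k \<le> card (blk P' \<alpha>)}.
         if card (blk P' \<alpha>) - j*k + 1 = s \<and> card P' + (if j = 0 then 0 else 1) = c then v P' j else 0)
      = (if s \<ge> 2 \<and> card (blk P' \<alpha>) = s - 1 \<and> card P' = c then v P' 0 else 0)
      + (if c \<ge> 1 then (\<Sum>j\<in>{1..card T}. if card (blk P' \<alpha>) = s - 1 + j*k \<and> card P' = c - 1 then v P' j else 0) else 0)"
      using jsum[OF k _ _ s, of "card (blk P' \<alpha>)" "card T" "card P'" c "v P'"] root_bounds[OF P'] by simp
  qed
  finally show ?thesis .
qed

end


lemma sum_aux:
  fixes a :: "'x \<Rightarrow> nat" and b :: "'x \<Rightarrow> 'y \<Rightarrow> nat"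
  assumes "finite X" "finite Y"
  shows "(\<Sum>x\<in>X. a x + (if C then \<Sum>y\<in>Y. b x y else 0)) = (\<Sum>x\<in>X. a x) + (if C then \<Sum>y\<in>Y. \<Sum>x\<in>X. b x y else 0)"
proof (cases C)
  case True
  then show ?thesis by (simp add: sum.distrib sum.swap[of b Y X])
qed simp

context setp
begin

lemma finT': "finite (NCT k T')" using finNCT basic(6) by blast

lemma Gs_rec:
  assumes k: "k > 0" and s: "s \<ge> 1"
  shows "Gs k T s c = (if s \<ge> 2 then Gs k T' (s-1) c else 0)
     + (if c \<ge> 1 then (\<Sum>j\<in>{1..card T}. Gs k T' (s - 1 + j*k) (c - 1)) else 0)"
proof -
  have "Gs k T s c = (\<Sum>P'\<in>NCT k T'. (if s \<ge> 2 \<and> card (blk P' \<alpha>) = s - 1 \<and> card P' = c then 1 else 0)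
      + (if c \<ge> 1 then (\<Sum>j\<in>{1..card T}. if card (blk P' \<alpha>) = s - 1 + j*k \<and> card P' = c - 1 then 1 else 0) else 0))"
    unfolding Gs_def MinT by (rule gen_rec[OF k s, where v = "\<lambda>_ _. 1"]) simp
  also have "\<dots> = (\<Sum>P'\<in>NCT k T'. (if s \<ge> 2 \<and> card (blk P' \<alpha>) = s - 1 \<and> card P' = c then 1 else 0))
      + (if c \<ge> 1 then (\<Sum>j\<in>{1..card T}. \<Sum>P'\<in>NCT k T'. if card (blk P' \<alpha>) = s - 1 + j*k \<and> card P' = c - 1 then 1 else 0) else 0)"
    by (rule sum_aux[OF finT']) simp
  also have "(\<Sum>P'\<in>NCT k T'. (if s \<ge> 2 \<and> card (blk P' \<alpha>) = s - 1 \<and> card P' = c then 1 else 0))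
     = (if s \<ge> 2 then Gs k T' (s-1) c else 0)"
    unfolding Gs_def MinT' by simp
  also have "(\<Sum>j\<in>{1..card T}. \<Sum>P'\<in>NCT k T'. if card (blk P' \<alpha>) = s - 1 + j*k \<and> card P' = c - 1 then 1 else 0)
     = (\<Sum>j\<in>{1..card T}. Gs k T' (s - 1 + j*k) (c - 1))"
    unfolding Gs_def MinT' by simp
  finally show ?thesis .
qed


lemma Hs_rec:
  assumes k: "k > 0" and s: "s \<ge> 1" and u: "u \<ge> 1"
  shows "Hs k u T s c = (if s \<ge> 2 then Hs k u T' (s-1) c else 0)
     + (if c \<ge> 1 then (\<Sum>j\<in>{1..card T}. Hs k u T' (s - 1 + j*k) (c - 1))
           + (if u \<le> card T then Gs k T' (s - 1 + u*k) (c - 1) else 0) else 0)"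
proof -
  define w' where "w' P' = card {B \<in> P'. B \<noteq> blk P' \<alpha> \<and> card B = u*k}" for P'
  have "Hs k u T s c = (\<Sum>P'\<in>NCT k T'. (if s \<ge> 2 \<and> card (blk P' \<alpha>) = s - 1 \<and> card P' = c then w' P' + (if (0::nat) \<noteq> 0 \<and> (0::nat) = u then 1 else 0) else 0)
      + (if c \<ge> 1 then (\<Sum>j\<in>{1..card T}. if card (blk P' \<alpha>) = s - 1 + j*k \<and> card P' = c - 1 then w' P' + (if j \<noteq> 0 \<and> j = u then 1 else 0) else 0) else 0))"
    unfolding Hs_def MinT
    by (rule gen_rec[OF k s, where v = "\<lambda>P' j. w' P' + (if j \<noteq> 0 \<and> j = u then 1 else 0)"
          and w = "\<lambda>P. card {B\<in>P. B \<noteq> blk P t0 \<and> card B = u*k}"])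
       (use perP(3)[OF k] in \<open>simp add: w'_def\<close>)
  also have "\<dots> = (\<Sum>P'\<in>NCT k T'. (if s \<ge> 2 \<and> card (blk P' \<alpha>) = s - 1 \<and> card P' = c then w' P' else 0))
      + (if c \<ge> 1 then (\<Sum>j\<in>{1..card T}. \<Sum>P'\<in>NCT k T'. if card (blk P' \<alpha>) = s - 1 + j*k \<and> card P' = c - 1 then w' P' + (if j \<noteq> 0 \<and> j = u then 1 else 0) else 0) else 0)"
    by (simp only: sum_aux[OF finT' finite_atLeastAtMost]) (simp cong: if_cong)
  also have "(\<Sum>P'\<in>NCT k T'. (if s \<ge> 2 \<and> card (blk P' \<alpha>) = s - 1 \<and> card P' = c then w' P' else 0))
     = (if s \<ge> 2 then Hs k u T' (s-1) c else 0)"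
    unfolding Hs_def MinT' w'_def by simp
  also have "(\<Sum>j\<in>{1..card T}. \<Sum>P'\<in>NCT k T'. if card (blk P' \<alpha>) = s - 1 + j*k \<and> card P' = c - 1 then w' P' + (if j \<noteq> 0 \<and> j = u then 1 else 0) else 0)
     = (\<Sum>j\<in>{1..card T}. Hs k u T' (s - 1 + j*k) (c - 1) + (if j = u then Gs k T' (s - 1 + u*k) (c - 1) else 0))"
  proof (rule sum.cong[OF refl])
    fix j assume j: "j \<in> {1..card T}"
    have "(\<Sum>P'\<in>NCT k T'. if card (blk P' \<alpha>) = s - 1 + j*k \<and> card P' = c - 1 then w' P' + (if j \<noteq> 0 \<and> j = u then 1 else 0) else 0)
      = (\<Sum>P'\<in>NCT k T'. (if card (blk P' \<alpha>) = s - 1 + j*k \<and> card P' = c - 1 then w' P' else 0)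
          + (if j = u then (if card (blk P' \<alpha>) = s - 1 + u*k \<and> card P' = c - 1 then 1 else 0) else 0))"
      by (rule sum.cong[OF refl]) (use j in auto)
    also have "\<dots> = Hs k u T' (s - 1 + j*k) (c - 1) + (if j = u then Gs k T' (s - 1 + u*k) (c - 1) else 0)"
      unfolding sum.distrib Hs_def Gs_def MinT' w'_def by simp
    finally show "(\<Sum>P'\<in>NCT k T'. if card (blk P' \<alpha>) = s - 1 + j*k \<and> card P' = c - 1 then w' P' + (if j \<noteq> 0 \<and> j = u then 1 else 0) else 0)
      = Hs k u T' (s - 1 + j*k) (c - 1) + (if j = u then Gs k T' (s - 1 + u*k) (c - 1) else 0)" .
  qed
  also have "\<dots> = (\<Sum>j\<in>{1..card T}. Hs k u T' (s - 1 + j*k) (c - 1))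
      + (if u \<le> card T then Gs k T' (s - 1 + u*k) (c - 1) else 0)"
    using u by (simp add: sum.distrib)
  finally show ?thesis by simp
qed

end


definition bn :: "int \<Rightarrow> int \<Rightarrow> int" where
  "bn a b = (if 0 \<le> b \<and> b \<le> a then int (nat a choose nat b) else 0)"

lemma bn_neg: "b < 0 \<Longrightarrow> bn a b = 0" unfolding bn_def by simp
lemma bn_big: "a < b \<Longrightarrow> bn a b = 0" unfolding bn_def by simp
lemma bn_0: "0 \<le> a \<Longrightarrow> bn a 0 = 1" unfolding bn_def by simp
lemma bn_1: "1 \<le> a \<Longrightarrow> bn a 1 = a" unfolding bn_def by simp

lemma bn_pascal:
  assumes a: "1 \<le> a"
  shows "bn a b = bn (a - 1) b + bn (a - 1) (b - 1)"
proof (cases "b < 0")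
  case True then show ?thesis by (simp add: bn_neg)
next
  case False
  show ?thesis
  proof (cases "b = 0")
    case True then show ?thesis using a by (simp add: bn_0 bn_neg)
  next
    case False
    with \<open>\<not> b < 0\<close> have b: "1 \<le> b" by simp
    define A where "A = nat (a - 1)"
    define B where "B = nat (b - 1)"
    have A: "a = int (Suc A)" using a unfolding A_def by simp
    have B: "b = int (Suc B)" using b unfolding B_def by simp
    have e: "nat a = Suc A" "nat b = Suc B" "nat (a - 1) = A" "nat (b - 1) = B" using A B by simp_all
    have p: "Suc A choose Suc B = (A choose B) + (A choose Suc B)" by simp
    have z: "\<not> Suc B \<le> A \<Longrightarrow> A choose Suc B = 0" by simp
    show ?thesis
    proof (cases "B \<le> A")
      case True
      then have "b \<le> a" "0 \<le> b" "0 \<le> b - 1" "b - 1 \<le> a - 1" using A B by simp_all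
      moreover have "b \<le> a - 1 \<longleftrightarrow> Suc B \<le> A" using A B by linarith
      ultimately show ?thesis unfolding bn_def e using p z by auto
    next
      case False
      then have "\<not> b \<le> a" "\<not> b - 1 \<le> a - 1" "\<not> b \<le> a - 1" using A B by simp_all
      then show ?thesis unfolding bn_def by simp
    qed
  qed
qed

definition g :: "nat \<Rightarrow> nat \<Rightarrow> nat \<Rightarrow> nat \<Rightarrow> int" where
  "g k n s c = (if n = 0 then (if c = 1 then 1 else 0)
     else bn (int n - 1) (int c - 2) * bn (int (n*k+s)) (int c - 1)
        - int k * bn (int n) (int c - 1) * bn (int (n*k+s) - 1) (int c - 2))"

lemma g0: "g k 0 s c = (if c = 1 then 1 else 0)" unfolding g_def by simp

lemma g1: assumes "k \<ge> 1" shows "g k 1 s c = (if c = 2 then int s else 0)"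
proof -
  have g: "g k 1 s c = bn 0 (int c - 2) * bn (int (k+s)) (int c - 1)
        - int k * bn 1 (int c - 1) * bn (int (k+s) - 1) (int c - 2)" unfolding g_def by simp
  consider "c = 0" | "c = 1" | "c = 2" | "c = 3" | "c \<ge> 4" by linarith
  then show ?thesis
  proof cases
    case 1 then show ?thesis unfolding g by (simp add: bn_neg)
  next
    case 2 then show ?thesis unfolding g by (simp add: bn_neg)
  next
    case 3
    have "bn (int (k+s)) 1 = int (k+s)" using assms by (intro bn_1) simp
    moreover have "bn (int (k+s) - 1) 0 = 1" using assms by (intro bn_0) simp
    ultimately show ?thesis unfolding g using 3 by (simp add: bn_0 bn_1)
  next
    case 4 then show ?thesis unfolding g by (simp add: bn_big)
  next
    case 5
    then have "bn 0 (int c - 2) = 0" "bn 1 (int c - 1) = 0" by (simp_all add: bn_big)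
    then show ?thesis unfolding g using 5 by simp
  qed
qed

lemma gL0:
  assumes k: "k \<ge> 1" and s: "s \<ge> 1"
  shows "g k 1 s c - g k 1 (s-1) c = g k 0 (s+k-1) (c-1) + (g k 0 (s+k) c - g k 0 (s+k-1) c)"
  unfolding g1[OF k] g0 using s by auto

lemma gL:
  assumes k: "k \<ge> 1" and s: "s \<ge> 1" and c: "c \<ge> 1" and n: "n \<ge> 1"
  shows "g k (n+1) s c - g k (n+1) (s-1) c = g k n (s+k-1) (c-1) + (g k n (s+k) c - g k n (s+k-1) c)"
proof -
  define X where "X = int ((n+1)*k+s) - 1"
  define C where "C = int c"
  define m where "m = int n"
  have "(n+1)*k \<ge> 1*k" by (rule mult_le_mono1) simp
  then have "(n+1)*k + s \<ge> 2" using k s by linarith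
  then have X1: "X \<ge> 1" unfolding X_def by linarith
  have i1: "int ((n+1)*k+s) = X + 1" unfolding X_def by simp
  have i2: "int ((n+1)*k+(s-1)) = X" unfolding X_def using s by simp
  have i3: "int (n*k+(s+k-1)) = X" unfolding X_def using s by (simp add: algebra_simps)
  have i4: "int (n*k+(s+k)) = X + 1" unfolding X_def by (simp add: algebra_simps)
  have e1: "g k (n+1) s c = bn m (C-2) * bn (X+1) (C-1) - int k * bn (m+1) (C-1) * bn X (C-2)"
    unfolding g_def i1 C_def m_def by (simp add: algebra_simps)
  have e2: "g k (n+1) (s-1) c = bn m (C-2) * bn X (C-1) - int k * bn (m+1) (C-1) * bn (X-1) (C-2)"
    unfolding g_def i2 C_def m_def by (simp add: algebra_simps)
  have e3: "g k n (s+k-1) (c-1) = bn (m-1) (C-3) * bn X (C-2) - int k * bn m (C-2) * bn (X-1) (C-3)"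
    unfolding g_def i3 C_def m_def using n c by (simp add: of_nat_diff)
  have e4: "g k n (s+k) c = bn (m-1) (C-2) * bn (X+1) (C-1) - int k * bn m (C-1) * bn X (C-2)"
    unfolding g_def i4 C_def m_def using n by simp
  have e5: "g k n (s+k-1) c = bn (m-1) (C-2) * bn X (C-1) - int k * bn m (C-1) * bn (X-1) (C-2)"
    unfolding g_def i3 C_def m_def using n by simp
  have p1: "bn (X+1) (C-1) = bn X (C-1) + bn X (C-2)" using bn_pascal[of "X+1" "C-1"] X1 by simp
  have p2: "bn X (C-2) = bn (X-1) (C-2) + bn (X-1) (C-3)" using bn_pascal[of X "C-2"] X1 by simp
  have p4: "bn (m+1) (C-1) = bn m (C-1) + bn m (C-2)" using bn_pascal[of "m+1" "C-1"] n unfolding m_def by simp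
  have p3: "bn m (C-2) = bn (m-1) (C-2) + bn (m-1) (C-3)" using bn_pascal[of m "C-2"] n unfolding m_def by simp
  show ?thesis unfolding e1 e2 e3 e4 e5 p1 p4 unfolding p2 p3 by (simp add: algebra_simps)
qed

lemma GA:
  assumes k: "k \<ge> 1" and s: "s \<ge> 1" and c: "c \<ge> 1"
  shows "(\<Sum>j=1..n. g k (n-j) (s-1+j*k) (c-1)) = g k n s c - g k n (s-1) c"
  using s
proof (induction n arbitrary: s)
  case 0 then show ?case by (simp add: g0)
next
  case (Suc n)
  have "(\<Sum>j=1..Suc n. g k (Suc n - j) (s-1+j*k) (c-1)) = g k n (s-1+k) (c-1) + (\<Sum>j=Suc 1..Suc n. g k (Suc n - j) (s-1+j*k) (c-1))"
    by (subst sum.atLeast_Suc_atMost) simp_all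
  also have "(\<Sum>j=Suc 1..Suc n. g k (Suc n - j) (s-1+j*k) (c-1)) = (\<Sum>i=1..n. g k (n - i) ((s+k)-1+i*k) (c-1))"
  proof -
    have "(\<Sum>j=Suc 1..Suc n. g k (Suc n - j) (s-1+j*k) (c-1)) = (\<Sum>i=1..n. g k (Suc n - Suc i) (s-1+(Suc i)*k) (c-1))"
      by (rule sum.shift_bounds_cl_Suc_ivl)
    also have "\<dots> = (\<Sum>i=1..n. g k (n - i) ((s+k)-1+i*k) (c-1))"
      using Suc.prems by (intro sum.cong) (simp_all add: algebra_simps)
    finally show ?thesis .
  qed
  also have "\<dots> = g k n (s+k) c - g k n (s+k-1) c"
  proof -
    have eq: "\<And>i. s + k - 1 + i*k = s + k + i*k - 1" using Suc.prems by simp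
    have sk: "1 \<le> s + k" using Suc.prems by simp
    show ?thesis using Suc.IH[OF sk] eq by simp
  qed
  finally have L: "(\<Sum>j=1..Suc n. g k (Suc n - j) (s-1+j*k) (c-1)) = g k n (s+k-1) (c-1) + (g k n (s+k) c - g k n (s+k-1) c)"
    using Suc.prems by (simp add: algebra_simps)
  show ?case
  proof (cases "n = 0")
    case True then show ?thesis using L gL0[OF k Suc.prems] by simp
  next
    case False then show ?thesis using L gL[OF k Suc.prems c] by simp
  qed
qed

lemma bn_nat: "bn (int a) (int b) = int (a choose b)"
  unfolding bn_def by auto

lemma gS0: assumes n: "n \<ge> 1" and k: "k \<ge> 1" shows "g k n 0 c = 0"
proof (cases "c \<ge> 2")
  case False
  then have "c = 0 \<or> c = 1" by auto
  then show ?thesis unfolding g_def using n by (auto simp: bn_neg)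
next
  case True
  define M where "M = c - 1"
  have M: "M \<ge> 1" "int c - 1 = int M" "int c - 2 = int (M - 1)" using True unfolding M_def by auto
  have nk: "n*k \<ge> 1" using n k by (metis mult_le_mono nat_mult_1)
  have i1: "int n - 1 = int (n - 1)" "int (n*k) - 1 = int (n*k - 1)" using n nk by auto
  have e: "g k n 0 c = int ((n-1) choose (M-1)) * int (n*k choose M) - int k * int (n choose M) * int ((n*k-1) choose (M-1))"
    unfolding g_def using n by (simp add: M i1 bn_nat del: of_nat_diff of_nat_mult)
  have a1: "M * (n*k choose M) = n*k * ((n*k-1) choose (M-1))" using M(1) by (simp add: times_binomial_minus1_eq)
  have a2: "M * (n choose M) = n * ((n-1) choose (M-1))" using M(1) by (simp add: times_binomial_minus1_eq)
  have "M * (((n-1) choose (M-1)) * (n*k choose M)) = M * (k * (n choose M) * ((n*k-1) choose (M-1)))"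
  proof -
    have "M * (((n-1) choose (M-1)) * (n*k choose M)) = ((n-1) choose (M-1)) * (M * (n*k choose M))" by simp
    also have "\<dots> = ((n-1) choose (M-1)) * (n*k * ((n*k-1) choose (M-1)))" using a1 by simp
    also have "\<dots> = k * (n * ((n-1) choose (M-1))) * ((n*k-1) choose (M-1))" by simp
    also have "\<dots> = k * (M * (n choose M)) * ((n*k-1) choose (M-1))" using a2 by simp
    also have "\<dots> = M * (k * (n choose M) * ((n*k-1) choose (M-1)))" by simp
    finally show ?thesis .
  qed
  then have "((n-1) choose (M-1)) * (n*k choose M) = k * (n choose M) * ((n*k-1) choose (M-1))"
    using M(1) by simp
  then have "int ((n-1) choose (M-1)) * int (n*k choose M) = int k * int (n choose M) * int ((n*k-1) choose (M-1))"
    by (metis of_nat_mult)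
  then show ?thesis unfolding e by simp
qed

lemma bn_negA: "a < 0 \<Longrightarrow> bn a b = 0" unfolding bn_def by simp

definition h :: "nat \<Rightarrow> nat \<Rightarrow> nat \<Rightarrow> nat \<Rightarrow> nat \<Rightarrow> int" where
  "h k u n s c = int s * bn (int (n*k+s) - 1) (int c - 2) * bn (int n - int u - 1) (int c - 3)
     + (if c = 2 \<and> n = u then int s else 0)"

definition dl :: "nat \<Rightarrow> nat \<Rightarrow> nat \<Rightarrow> nat \<Rightarrow> nat \<Rightarrow> int" where
  "dl k u n s c = (if u \<le> n then g k (n-u) (s-1+u*k) (c-1) else 0)"

lemma HL:
  assumes k: "k \<ge> 1" and s: "s \<ge> 1" and c: "c \<ge> 1" and u: "u \<ge> 1"
  shows "h k u (n+1) s c - h k u (n+1) (s-1) c - dl k u (n+1) s c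
       = h k u n (s+k-1) (c-1) + (h k u n (s+k) c - h k u n (s+k-1) c - dl k u n (s+k) c)"
proof -
  define X where "X = int ((n+1)*k+s) - 1"
  define C where "C = int c"
  define a where "a = int n - int u - 1"
  define S where "S = int s"
  have "(n+1)*k \<ge> 1*k" by (rule mult_le_mono1) simp
  then have "(n+1)*k + s \<ge> 2" using k s by linarith
  then have X1: "X \<ge> 1" unfolding X_def by linarith
  have i1: "int ((n+1)*k+s) - 1 = X" unfolding X_def by simp
  have i2: "int ((n+1)*k+(s-1)) - 1 = X - 1" unfolding X_def using s by simp
  have i3: "int (n*k+(s+k-1)) - 1 = X - 1" unfolding X_def using s by (simp add: algebra_simps)
  have i4: "int (n*k+(s+k)) - 1 = X" unfolding X_def by (simp add: algebra_simps)
  have H1: "h k u (n+1) s c = S * bn X (C-2) * bn (a+1) (C-3) + (if c = 2 \<and> n+1 = u then S else 0)"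
    unfolding h_def i1 C_def a_def S_def by (simp add: algebra_simps)
  have H2: "h k u (n+1) (s-1) c = (S-1) * bn (X-1) (C-2) * bn (a+1) (C-3) + (if c = 2 \<and> n+1 = u then S-1 else 0)"
    unfolding h_def i2 C_def a_def S_def using s by (simp add: algebra_simps of_nat_diff)
  have H3: "h k u n (s+k-1) (c-1) = (S+int k-1) * bn (X-1) (C-3) * bn a (C-4) + (if c = 3 \<and> n = u then S+int k-1 else 0)"
    unfolding h_def i3 C_def a_def S_def using s c by (auto simp add: algebra_simps of_nat_diff)
  have H4: "h k u n (s+k) c = (S+int k) * bn X (C-2) * bn a (C-3) + (if c = 2 \<and> n = u then S+int k else 0)"
    unfolding h_def i4 C_def a_def S_def by (simp add: algebra_simps)
  have H5: "h k u n (s+k-1) c = (S+int k-1) * bn (X-1) (C-2) * bn a (C-3) + (if c = 2 \<and> n = u then S+int k-1 else 0)"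
    unfolding h_def i3 C_def a_def S_def using s by (simp add: algebra_simps of_nat_diff)
  consider "u > n+1" | "u = n+1" | "u = n" | "u + 1 \<le> n" by linarith
  then show ?thesis
  proof cases
    case 1
    then have "a + 1 < 0" "a < 0" unfolding a_def by auto
    then show ?thesis unfolding H1 H2 H3 H4 H5 dl_def using 1 by (simp add: bn_negA)
  next
    case 2
    then have "a + 1 < 0" "a < 0" unfolding a_def by auto
    moreover have "dl k u (n+1) s c = (if c = 2 then 1 else 0)" unfolding dl_def using 2 c by (auto simp: g0)
    ultimately show ?thesis unfolding H1 H2 H3 H4 H5 dl_def[of k u n] using 2 by (auto simp add: bn_negA)
  next
    case 3
    then have a1: "a + 1 = 0" "a < 0" unfolding a_def by auto
    have d1: "dl k u (n+1) s c = (if c = 3 then S - 1 + int (n*k) else 0)"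
    proof -
      have "dl k u (n+1) s c = g k 1 (s-1+n*k) (c-1)" unfolding dl_def using 3 by simp
      also have "\<dots> = (if c = 3 then S - 1 + int (n*k) else 0)" using g1[OF k] s unfolding S_def by auto
      finally show ?thesis .
    qed
    have d2: "dl k u n (s+k) c = (if c = 2 then 1 else 0)" unfolding dl_def using 3 c by (auto simp: g0)
    have X: "X = int (n*k) + int k + S - 1" unfolding X_def S_def by (simp add: algebra_simps)
    have b0: "bn 0 (C-3) = (if c = 3 then 1 else 0)" unfolding C_def bn_def by auto
    have ba: "\<And>x. bn a x = 0" using a1(2) by (simp add: bn_negA)
    show ?thesis
    proof (cases "c = 3")
      case True
      have "(n+1)*k \<ge> 2*k" using 3 u by (intro mult_le_mono1) simp
      then have "(n+1)*k + s \<ge> 3" using k s by linarith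
      then have "X - 1 \<ge> 1" unfolding X_def by linarith
      then have bx: "bn X (C-2) = X" "bn (X-1) (C-2) = X - 1" using True X1 unfolding C_def by (simp_all add: bn_1)
      show ?thesis unfolding H1 H2 H3 H4 H5 d1 d2 a1 b0 bx ba using True 3 by (simp add: X algebra_simps)
    next
      case False
      then show ?thesis unfolding H1 H2 H3 H4 H5 d1 d2 a1 b0 ba using 3 by auto
    qed
  next
    case 4
    have a0: "a \<ge> 0" unfolding a_def using 4 by simp
    have ia: "int (n + 1 - u) - 1 = a + 1" "int (n - u) - 1 = a" "int (n+1-u) = a + 2" "int (n - u) = a + 1"
      unfolding a_def using 4 by auto
    have ix: "int ((n + 1 - u) * k + (s - 1 + u * k)) = X" "int ((n - u) * k + (s + k - 1 + u * k)) = X"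
    proof -
      have "(n + 1 - u) * k + u * k = (n + 1 - u + u) * k" by (simp add: add_mult_distrib)
      also have "\<dots> = (n+1)*k" using 4 by simp
      finally have "(n + 1 - u) * k + u * k = (n+1)*k" .
      then show "int ((n + 1 - u) * k + (s - 1 + u * k)) = X" unfolding X_def using s by (simp add: algebra_simps)
      have "(n - u) * k + u * k = (n - u + u) * k" by (simp add: add_mult_distrib)
      also have "\<dots> = n*k" using 4 by simp
      finally have "(n - u) * k + u * k = n*k" .
      then show "int ((n - u) * k + (s + k - 1 + u * k)) = X" unfolding X_def using s by (simp add: algebra_simps)
    qed
    have c1: "int (c-1) - 2 = C - 3" "int (c-1) - 1 = C - 2" using c unfolding C_def by auto
    have d1: "dl k u (n+1) s c = bn (a+1) (C-3) * bn X (C-2) - int k * bn (a+2) (C-2) * bn (X-1) (C-3)"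
    proof -
      have "dl k u (n+1) s c = g k (n+1-u) (s-1+u*k) (c-1)" unfolding dl_def using 4 by simp
      also have "\<dots> = bn (int (n+1-u) - 1) (int (c-1) - 2) * bn (int ((n+1-u)*k + (s-1+u*k))) (int (c-1) - 1)
        - int k * bn (int (n+1-u)) (int (c-1) - 1) * bn (int ((n+1-u)*k + (s-1+u*k)) - 1) (int (c-1) - 2)"
        unfolding g_def using 4 by (intro if_not_P) simp
      also have "\<dots> = bn (a+1) (C-3) * bn X (C-2) - int k * bn (a+2) (C-2) * bn (X-1) (C-3)"
        unfolding ia ix c1 by (simp add: add.commute)
      finally show ?thesis .
    qed
    have d2: "dl k u n (s+k) c = bn a (C-3) * bn X (C-2) - int k * bn (a+1) (C-2) * bn (X-1) (C-3)"
    proof -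
      have "dl k u n (s+k) c = g k (n-u) (s+k-1+u*k) (c-1)" unfolding dl_def using 4 by simp
      also have "\<dots> = bn (int (n-u) - 1) (int (c-1) - 2) * bn (int ((n-u)*k + (s+k-1+u*k))) (int (c-1) - 1)
        - int k * bn (int (n-u)) (int (c-1) - 1) * bn (int ((n-u)*k + (s+k-1+u*k)) - 1) (int (c-1) - 2)"
        unfolding g_def using 4 by (intro if_not_P) simp
      also have "\<dots> = bn a (C-3) * bn X (C-2) - int k * bn (a+1) (C-2) * bn (X-1) (C-3)"
        unfolding ia ix c1 by (simp add: add.commute)
      finally show ?thesis .
    qed
    have p1: "bn X (C-2) = bn (X-1) (C-2) + bn (X-1) (C-3)" using bn_pascal[of X "C-2"] X1 by simp
    have p2: "bn (a+1) (C-3) = bn a (C-3) + bn a (C-4)" using bn_pascal[of "a+1" "C-3"] a0 by simp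
    have p3: "bn (a+2) (C-2) = bn (a+1) (C-2) + bn (a+1) (C-3)" using bn_pascal[of "a+2" "C-2"] a0 by (simp add: ac_simps)
    have p4: "bn (a+1) (C-2) = bn a (C-2) + bn a (C-3)" using bn_pascal[of "a+1" "C-2"] a0 by simp
    have nz: "\<not> (n + 1 = u)" "\<not> (n = u)" using 4 by auto
    show ?thesis unfolding H1 H2 H3 H4 H5 d1 d2 using nz
      unfolding p3 unfolding p4 unfolding p2 unfolding p1 by (simp add: algebra_simps)
  qed
qed

lemma h0: "u \<ge> 1 \<Longrightarrow> h k u 0 s c = 0" unfolding h_def by (simp add: bn_negA)

lemma HA:
  assumes k: "k \<ge> 1" and s: "s \<ge> 1" and c: "c \<ge> 1" and u: "u \<ge> 1"
  shows "(\<Sum>j=1..n. h k u (n-j) (s-1+j*k) (c-1)) = h k u n s c - h k u n (s-1) c - dl k u n s c"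
  using s
proof (induction n arbitrary: s)
  case 0 then show ?case using u by (simp add: h0 dl_def)
next
  case (Suc n)
  have "(\<Sum>j=1..Suc n. h k u (Suc n - j) (s-1+j*k) (c-1)) = h k u n (s-1+k) (c-1) + (\<Sum>j=Suc 1..Suc n. h k u (Suc n - j) (s-1+j*k) (c-1))"
    by (subst sum.atLeast_Suc_atMost) simp_all
  also have "(\<Sum>j=Suc 1..Suc n. h k u (Suc n - j) (s-1+j*k) (c-1)) = (\<Sum>i=1..n. h k u (n - i) ((s+k)-1+i*k) (c-1))"
  proof -
    have "(\<Sum>j=Suc 1..Suc n. h k u (Suc n - j) (s-1+j*k) (c-1)) = (\<Sum>i=1..n. h k u (Suc n - Suc i) (s-1+(Suc i)*k) (c-1))"
      by (rule sum.shift_bounds_cl_Suc_ivl)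
    also have "\<dots> = (\<Sum>i=1..n. h k u (n - i) ((s+k)-1+i*k) (c-1))"
      using Suc.prems by (intro sum.cong) (simp_all add: algebra_simps)
    finally show ?thesis .
  qed
  also have "\<dots> = h k u n (s+k) c - h k u n (s+k-1) c - dl k u n (s+k) c"
  proof -
    have eq: "\<And>i. s + k - 1 + i*k = s + k + i*k - 1" using Suc.prems by simp
    have sk: "1 \<le> s + k" using Suc.prems by simp
    show ?thesis using Suc.IH[OF sk] eq by simp
  qed
  finally have L: "(\<Sum>j=1..Suc n. h k u (Suc n - j) (s-1+j*k) (c-1)) = h k u n (s+k-1) (c-1) + (h k u n (s+k) c - h k u n (s+k-1) c - dl k u n (s+k) c)"
    using Suc.prems by (simp add: algebra_simps)
  show ?case using L HL[OF k Suc.prems c u, of n] by simp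
qed


lemma NCT_single: "NCT k {t} = {{{t}}}"
proof (rule set_eqI)
  fix P
  show "P \<in> NCT k {t} \<longleftrightarrow> P \<in> {{{t}}}"
  proof
    assume P: "P \<in> NCT k {t}"
    then have p: "partition_on {t} P" unfolding NCT_def by simp
    have "\<And>B. B \<in> P \<Longrightarrow> B = {t}"
    proof -
      fix B assume B: "B \<in> P"
      have "B \<subseteq> {t}" using partE(1)[OF p] B by blast
      moreover have "B \<noteq> {}" using partE(3)[OF p] B by blast
      ultimately show "B = {t}" by blast
    qed
    moreover have "P \<noteq> {}" using partE(1)[OF p] by auto
    ultimately show "P \<in> {{{t}}}" by blast
  next
    assume "P \<in> {{{t}}}"
    then have PP: "P = {{t}}" by simp
    have "partition_on {t} {{t}}" by (rule partition_on_space) simp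
    moreover have "noncrossing {{t}}" unfolding nc_iff by simp
    ultimately show "P \<in> NCT k {t}" unfolding NCT_def PP by simp
  qed
qed

lemma Gs_single: "Gs k {t} s c = (if s = 1 \<and> c = 1 then 1 else 0)"
proof -
  have "blk {{t}} t = {t}" by (rule blk_eq[OF partition_on_space]) auto
  then show ?thesis unfolding Gs_def NCT_single by simp
qed

lemma Hs_single: "Hs k u {t} s c = 0"
proof -
  have "blk {{t}} t = {t}" by (rule blk_eq[OF partition_on_space]) auto
  then show ?thesis unfolding Hs_def NCT_single by simp
qed

lemma root_le:
  assumes "finite T" "T \<noteq> {}" "P \<in> NCT k T"
  shows "card (blk P (Min T)) \<le> card T"
proof -
  have p: "partition_on T P" using assms(3) unfolding NCT_def by simp
  have "Min T \<in> T" using assms(1,2) by simp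
  then have "blk P (Min T) \<in> P" using blk[OF p] by blast
  then have "blk P (Min T) \<subseteq> T" using partE(1)[OF p] by blast
  then show ?thesis using assms(1) by (rule card_mono[rotated])
qed

lemma Gs_big: "finite T \<Longrightarrow> T \<noteq> {} \<Longrightarrow> card T < s \<Longrightarrow> Gs k T s c = 0"
  unfolding Gs_def using root_le by (intro sum.neutral) fastforce

lemma Hs_big: "finite T \<Longrightarrow> T \<noteq> {} \<Longrightarrow> card T < s \<Longrightarrow> Hs k u T s c = 0"
  unfolding Hs_def using root_le by (intro sum.neutral) fastforce

lemma split_sum:
  fixes F :: "nat \<Rightarrow> int"
  assumes "n \<le> N" "\<And>j. j \<in> {1..N} \<Longrightarrow> j \<le> n \<Longrightarrow> A j = F j" "\<And>j. j \<in> {1..N} \<Longrightarrow> \<not> j \<le> n \<Longrightarrow> A j = 0"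
  shows "(\<Sum>j\<in>{1..N}. A j) = (\<Sum>j\<in>{1..n}. F j)"
proof -
  have "(\<Sum>j\<in>{1..N}. A j) = (\<Sum>j\<in>{1..N}. if j \<le> n then F j else 0)"
    using assms(2,3) by (intro sum.cong) auto
  also have "\<dots> = (\<Sum>j\<in>{j\<in>{1..N}. j \<le> n}. F j)" by (rule sum.inter_filter[symmetric]) simp
  also have "{j\<in>{1..N}. j \<le> n} = {1..n}" using assms(1) by auto
  finally show ?thesis .
qed

lemma setup_from:
  assumes "finite T" "card T \<ge> 2"
  shows "setp T (T - {Min T}) (Min T) (Min (T - {Min T}))"
proof
  show "finite T" "Min T = Min T" "T - {Min T} = T - {Min T}" "Min (T - {Min T}) = Min (T - {Min T})" using assms by auto
  have "T \<noteq> {}" using assms by auto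
  then have "Min T \<in> T" using assms by simp
  then have "card (T - {Min T}) = card T - 1" using assms by simp
  show "T - {Min T} \<noteq> {}"
  proof
    assume e: "T - {Min T} = {}"
    have "card (T - {Min T}) = 0" unfolding e by simp
    with \<open>card (T - {Min T}) = card T - 1\<close> show False using assms by simp
  qed
qed

lemma Gthm:
  assumes "k > 0" "finite T" "card T = n*k + s" "s \<ge> 1"
  shows "int (Gs k T s c) = g k n s c"
  using assms
proof (induction "card T" arbitrary: T n s c rule: less_induct)
  case less
  note k = less.prems(1) and fin = less.prems(2) and cT = less.prems(3) and s = less.prems(4)
  have k1: "k \<ge> 1" using k by simp
  show ?case
  proof (cases "card T = 1")
    case True
    then obtain t where T: "T = {t}" by (rule card_1_singletonE)
    have nk0: "n*k = 0" using cT True s by linarith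
    then have "n = 0" using k by simp
    moreover have "s = 1" using cT True nk0 by linarith
    ultimately have "n = 0" "s = 1" by simp_all
    then show ?thesis unfolding T Gs_single by (simp add: g0)
  next
    case False
    then have c2: "card T \<ge> 2" using cT s by simp
    define t0 where "t0 = Min T"
    define T' where "T' = T - {t0}"
    define al where "al = Min T'"
    interpret setp k T T' t0 al using setup_from[OF fin c2] unfolding t0_def T'_def al_def .
    have cT': "card T' = n*k + (s-1)" using basic(1) fin cT s unfolding T'_def by simp
    have ltT: "card T' < card T" using c2 cT' cT s by simp
    have T'ne: "T' \<noteq> {}" by (rule ne)
    have IH: "\<And>n' s' c'. card T' = n'*k + s' \<Longrightarrow> s' \<ge> 1 \<Longrightarrow> int (Gs k T' s' c') = g k n' s' c'"
    proof -
      fix n' s' c' assume a: "card T' = n'*k + s'" "s' \<ge> 1"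
      show "int (Gs k T' s' c') = g k n' s' c'" by (rule less.hyps[OF ltT k basic(6) a])
    qed
    have rec: "Gs k T s c = (if s \<ge> 2 then Gs k T' (s-1) c else 0)
       + (if c \<ge> 1 then (\<Sum>j\<in>{1..card T}. Gs k T' (s - 1 + j*k) (c - 1)) else 0)"
      by (rule Gs_rec[OF k s])
    have "n \<le> n*k" using k by simp
    then have nT: "n \<le> card T" using cT by linarith
    have S: "(\<Sum>j\<in>{1..card T}. int (Gs k T' (s - 1 + j*k) (c - 1))) = (\<Sum>j\<in>{1..n}. g k (n-j) (s-1+j*k) (c-1))"
    proof (rule split_sum[OF nT])
      fix j assume j: "j \<in> {1..card T}" "j \<le> n"
      have jk: "j*k \<le> n*k" using j(2) by (rule mult_le_mono1)
      have "(n-j)*k = n*k - j*k" by (simp add: diff_mult_distrib)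
      then have "card T' = (n-j)*k + (s - 1 + j*k)" using cT' jk by linarith
      moreover have "s - 1 + j*k \<ge> 1" using j k by (simp add: Suc_le_eq)
      ultimately show "int (Gs k T' (s - 1 + j*k) (c - 1)) = g k (n-j) (s-1+j*k) (c-1)" using IH by blast
    next
      fix j assume j: "j \<in> {1..card T}" "\<not> j \<le> n"
      then have "(n+1)*k \<le> j*k" by (intro mult_le_mono1) simp
      moreover have "(n+1)*k = n*k + k" by simp
      ultimately have "card T' < s - 1 + j*k" using cT' k by linarith
      then show "int (Gs k T' (s - 1 + j*k) (c - 1)) = 0" using Gs_big[OF basic(6) T'ne] by simp
    qed
    define \<sigma> where "\<sigma> = (\<Sum>j\<in>{1..card T}. Gs k T' (s - 1 + j*k) (c - 1))"
    define \<gamma> where "\<gamma> = (\<Sum>j\<in>{1..n}. g k (n-j) (s-1+j*k) (c-1))"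
    have rec': "Gs k T s c = (if s \<ge> 2 then Gs k T' (s-1) c else 0) + (if c \<ge> 1 then \<sigma> else 0)"
      using rec unfolding \<sigma>_def .
    have S': "int \<sigma> = \<gamma>" unfolding \<sigma>_def \<gamma>_def of_nat_sum using S .
    have g0c: "n \<ge> 1 \<Longrightarrow> g k n s' 0 = 0" for s' unfolding g_def by (simp add: bn_neg)
    show ?thesis
    proof (cases "n = 0")
      case True
      then have s2: "s \<ge> 2" using c2 cT by simp
      have "int (Gs k T' (s-1) c) = g k 0 (s-1) c" using IH[of 0 "s-1"] cT' True s2 by simp
      moreover have "\<gamma> = 0" unfolding \<gamma>_def using True by simp
      ultimately show ?thesis using rec' s2 True S' by (simp add: g0)
    next
      case False
      then have n1: "n \<ge> 1" by simp
      show ?thesis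
      proof (cases "c \<ge> 1")
        case True
        have GA': "\<gamma> = g k n s c - g k n (s-1) c" unfolding \<gamma>_def by (rule GA[OF k1 s True])
        show ?thesis
        proof (cases "s \<ge> 2")
          case True
          have "int (Gs k T' (s-1) c) = g k n (s-1) c" using IH cT' True by simp
          then show ?thesis using rec' True \<open>1 \<le> c\<close> S' GA' by simp
        next
          case False
          then have "s = 1" using s by simp
          then show ?thesis using rec' \<open>1 \<le> c\<close> S' GA' gS0[OF n1 k1] by simp
        qed
      next
        case False
        then have c0: "c = 0" by simp
        show ?thesis
        proof (cases "s \<ge> 2")
          case True
          have "int (Gs k T' (s-1) c) = g k n (s-1) c" using IH cT' True by simp
          then show ?thesis using rec' True c0 g0c[OF n1] by simp
        next
          case False
          then show ?thesis using rec' c0 g0c[OF n1] by simp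
        qed
      qed
    qed
  qed
qed


lemma Hthm:
  assumes "k > 0" "u \<ge> 1" "finite T" "card T = n*k + s" "s \<ge> 1"
  shows "int (Hs k u T s c) = h k u n s c"
  using assms
proof (induction "card T" arbitrary: T n s c rule: less_induct)
  case less
  note k = less.prems(1) and u = less.prems(2) and fin = less.prems(3) and cT = less.prems(4) and s = less.prems(5)
  have k1: "k \<ge> 1" using k by simp
  show ?case
  proof (cases "card T = 1")
    case True
    then obtain t where T: "T = {t}" by (rule card_1_singletonE)
    have nk0: "n*k = 0" using cT True s by linarith
    then have "n = 0" using k by simp
    then show ?thesis unfolding T Hs_single using u by (simp add: h0)
  next
    case False
    then have c2: "card T \<ge> 2" using cT s by simp
    define t0 where "t0 = Min T"
    define T' where "T' = T - {t0}"
    define al where "al = Min T'"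
    interpret setp k T T' t0 al using setup_from[OF fin c2] unfolding t0_def T'_def al_def .
    have cT': "card T' = n*k + (s-1)" using basic(1) fin cT s unfolding T'_def by simp
    have ltT: "card T' < card T" using c2 cT' cT s by simp
    have T'ne: "T' \<noteq> {}" by (rule ne)
    have IH: "\<And>n' s' c'. card T' = n'*k + s' \<Longrightarrow> s' \<ge> 1 \<Longrightarrow> int (Hs k u T' s' c') = h k u n' s' c'"
    proof -
      fix n' s' c' assume a: "card T' = n'*k + s'" "s' \<ge> 1"
      show "int (Hs k u T' s' c') = h k u n' s' c'" by (rule less.hyps[OF ltT k u basic(6) a])
    qed
    have rec: "Hs k u T s c = (if s \<ge> 2 then Hs k u T' (s-1) c else 0)
     + (if c \<ge> 1 then (\<Sum>j\<in>{1..card T}. Hs k u T' (s - 1 + j*k) (c - 1))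
           + (if u \<le> card T then Gs k T' (s - 1 + u*k) (c - 1) else 0) else 0)"
      by (rule Hs_rec[OF k s u])
    have "n \<le> n*k" using k by simp
    then have nT: "n \<le> card T" using cT by linarith
    have S: "(\<Sum>j\<in>{1..card T}. int (Hs k u T' (s - 1 + j*k) (c - 1))) = (\<Sum>j\<in>{1..n}. h k u (n-j) (s-1+j*k) (c-1))"
    proof (rule split_sum[OF nT])
      fix j assume j: "j \<in> {1..card T}" "j \<le> n"
      have jk: "j*k \<le> n*k" using j(2) by (rule mult_le_mono1)
      have "(n-j)*k = n*k - j*k" by (simp add: diff_mult_distrib)
      then have "card T' = (n-j)*k + (s - 1 + j*k)" using cT' jk by linarith
      moreover have "s - 1 + j*k \<ge> 1" using j k by (simp add: Suc_le_eq)
      ultimately show "int (Hs k u T' (s - 1 + j*k) (c - 1)) = h k u (n-j) (s-1+j*k) (c-1)" using IH by blast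
    next
      fix j assume j: "j \<in> {1..card T}" "\<not> j \<le> n"
      then have "(n+1)*k \<le> j*k" by (intro mult_le_mono1) simp
      moreover have "(n+1)*k = n*k + k" by simp
      ultimately have "card T' < s - 1 + j*k" using cT' k by linarith
      then show "int (Hs k u T' (s - 1 + j*k) (c - 1)) = 0" using Hs_big[OF basic(6) T'ne] by simp
    qed
    have D: "int (if u \<le> card T then Gs k T' (s - 1 + u*k) (c - 1) else 0) = dl k u n s c"
    proof (cases "u \<le> n")
      case True
      have jk: "u*k \<le> n*k" using True by (rule mult_le_mono1)
      have "(n-u)*k = n*k - u*k" by (simp add: diff_mult_distrib)
      then have "card T' = (n-u)*k + (s - 1 + u*k)" using cT' jk by linarith
      moreover have "s - 1 + u*k \<ge> 1" using u k by (simp add: Suc_le_eq)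
      ultimately have "int (Gs k T' (s - 1 + u*k) (c - 1)) = g k (n-u) (s - 1 + u*k) (c - 1)"
        using Gthm[OF k basic(6)] by blast
      then show ?thesis using True nT unfolding dl_def by simp
    next
      case False
      then have "(n+1)*k \<le> u*k" by (intro mult_le_mono1) simp
      moreover have "(n+1)*k = n*k + k" by simp
      ultimately have "card T' < s - 1 + u*k" using cT' k by linarith
      then show ?thesis using Gs_big[OF basic(6) T'ne] False unfolding dl_def by simp
    qed
    define \<sigma> where "\<sigma> = (\<Sum>j\<in>{1..card T}. Hs k u T' (s - 1 + j*k) (c - 1))"
    define \<gamma> where "\<gamma> = (\<Sum>j\<in>{1..n}. h k u (n-j) (s-1+j*k) (c-1))"
    define \<delta> where "\<delta> = (if u \<le> card T then Gs k T' (s - 1 + u*k) (c - 1) else 0)"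
    have rec': "Hs k u T s c = (if s \<ge> 2 then Hs k u T' (s-1) c else 0) + (if c \<ge> 1 then \<sigma> + \<delta> else 0)"
      using rec unfolding \<sigma>_def \<delta>_def .
    have S': "int \<sigma> = \<gamma>" unfolding \<sigma>_def \<gamma>_def of_nat_sum using S .
    have D': "int \<delta> = dl k u n s c" unfolding \<delta>_def using D .
    have h0c: "h k u n s' 0 = 0" for s' unfolding h_def by (simp add: bn_neg)
    have hs0: "h k u n 0 c' = 0" for c' unfolding h_def by simp
    show ?thesis
    proof (cases "c \<ge> 1")
      case True
      have HA': "\<gamma> = h k u n s c - h k u n (s-1) c - dl k u n s c" unfolding \<gamma>_def by (rule HA[OF k1 s True u])
      show ?thesis
      proof (cases "s \<ge> 2")
        case True
        have "int (Hs k u T' (s-1) c) = h k u n (s-1) c" using IH cT' True by simp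
        then show ?thesis using rec' True \<open>1 \<le> c\<close> S' D' HA' by simp
      next
        case False
        then have "s = 1" using s by simp
        then show ?thesis using rec' \<open>1 \<le> c\<close> S' D' HA' hs0 by simp
      qed
    next
      case False
      then have c0: "c = 0" by simp
      show ?thesis
      proof (cases "s \<ge> 2")
        case True
        have "int (Hs k u T' (s-1) c) = h k u n (s-1) c" using IH cT' True by simp
        then show ?thesis using rec' True c0 h0c by simp
      next
        case False
        then show ?thesis using rec' c0 h0c by simp
      qed
    qed
  qed
qed


lemma finNCT_g: "finite A \<Longrightarrow> finite (NCT k A)"
proof -
  assume "finite A"
  then have "finite {P. partition_on A P}" by (rule finitely_many_partition_on)
  then show ?thesis unfolding NCT_def by (rule rev_finite_subset) auto
qed

lemma T0: "{0..k*n} - {0::nat} = {1..k*n}" by auto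

lemma ins_NCT:
  assumes P: "P \<in> NCk k n"
  shows "insert {0} P \<in> NCT k {0..k*n}" "blk (insert {0} P) 0 = {0}" "{0} \<notin> P"
proof -
  have p: "partition_on {1..k*n} P" and nc: "noncrossing P" and dv: "\<forall>B\<in>P. k dvd card B"
    using P unfolding NCk_def by auto
  have U: "\<Union>P = {1..k*n}" using partE(1)[OF p] .
  have dj: "disjnt {0} (\<Union>P)" unfolding U disjnt_def by auto
  have pi: "partition_on {0..k*n} (insert {0} P)"
    unfolding partition_on_insert[OF dj] T0 using p by simp
  show "{0} \<notin> P"
  proof
    assume "{0} \<in> P"
    then have "0 \<in> \<Union>P" by blast
    with U show False by simp
  qed
  have nci: "noncrossing (insert {0} P)"
    unfolding nc_iff
  proof (intro ballI allI impI)
    fix B1 B2 a b c d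
    assume B: "B1 \<in> insert {0} P" "B2 \<in> insert {0} P" and o: "a < b" "b < c" "c < d"
      and m: "a \<in> B1" "c \<in> B1" "b \<in> B2" "d \<in> B2"
    show "B1 = B2"
    proof (cases "B1 = {0}")
      case True then show ?thesis using m o by simp
    next
      case False
      show ?thesis
      proof (cases "B2 = {0}")
        case True then show ?thesis using m o by simp
      next
        case False
        then have "B1 \<in> P" "B2 \<in> P" using B \<open>B1 \<noteq> {0}\<close> by auto
        then show ?thesis using ncE[OF nc _ _ o m] by blast
      qed
    qed
  qed
  have MinT: "Min {0..k*n} = (0::nat)" by (simp add: Min_eq_iff)
  show "insert {0} P \<in> NCT k {0..k*n}"
    unfolding NCT_def using pi nci dv MinT by auto
  show "blk (insert {0} P) 0 = {0}" by (rule blk_eq[OF pi]) auto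
qed

lemma del_NCk:
  assumes Q: "Q \<in> NCT k {0..k*n}" and r: "card (blk Q 0) = 1"
  shows "Q - {{0}} \<in> NCk k n" "{0} \<in> Q" "insert {0} (Q - {{0}}) = Q"
proof -
  have MinT: "Min {0..k*n} = (0::nat)" by (simp add: Min_eq_iff)
  have p: "partition_on {0..k*n} Q" and nc: "noncrossing Q" and dv: "\<forall>B\<in>Q. 0 \<notin> B \<longrightarrow> k dvd card B"
    using Q MinT unfolding NCT_def by auto
  have b: "blk Q 0 \<in> Q" "0 \<in> blk Q 0" using blk[OF p] by auto
  have b0: "blk Q 0 = {0}" using r b(2) by (metis card_1_singletonE singletonD)
  then show Q0: "{0} \<in> Q" using b by simp
  then show QI: "insert {0} (Q - {{0}}) = Q" by blast
  have dj: "disjnt {0} (\<Union>(Q - {{0}}))"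
  proof -
    have "\<And>B. B \<in> Q - {{0}} \<Longrightarrow> B \<inter> {0} = {}" using partE(2)[OF p _ Q0] by blast
    then show ?thesis unfolding disjnt_def by blast
  qed
  have "partition_on {0..k*n} (insert {0} (Q - {{0}}))" using QI p by simp
  then have p': "partition_on {1..k*n} (Q - {{0}})" unfolding partition_on_insert[OF dj] T0 by simp
  have nc': "noncrossing (Q - {{0}})"
    by (rule nc_mono[OF nc, where g = id]) auto
  have dv': "\<forall>B\<in>Q - {{0}}. k dvd card B"
  proof
    fix B assume B: "B \<in> Q - {{0}}"
    then have "B \<inter> {0} = {}" using partE(2)[OF p _ Q0] by blast
    then show "k dvd card B" using dv B by blast
  qed
  show "Q - {{0}} \<in> NCk k n" unfolding NCk_def using p' nc' dv' by simp
qed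

theorem proposition2p1:
  fixes k n m t :: nat
  assumes "k > 0" and "n > 0" and "m > 0" and "t > 0"
  shows "int (\<Sum>P\<in>{P\<in>NCk k n. card P = m}. card {B\<in>P. card B = t * k})
         = ibinom (int (n * k)) (int m - 1) * ibinom (int n - int t - 1) (int m - 2)"
proof -
  define T where "T = {0..k*n}"
  have MinT: "Min T = 0" unfolding T_def by (simp add: Min_eq_iff)
  have finT: "finite T" unfolding T_def by simp
  have cT: "card T = n*k + 1" unfolding T_def by simp
  define A where "A = {P\<in>NCk k n. card P = m}"
  define Bs where "Bs = {Q\<in>NCT k T. card (blk Q 0) = 1 \<and> card Q = m+1}"
  define w where "w Q = card {B\<in>Q. B \<noteq> blk Q 0 \<and> card B = t*k}" for Q
  have finNCk: "finite (NCk k n)"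
  proof -
    have "finite {P. partition_on {1..k*n} P}" by (rule finitely_many_partition_on) simp
    then show ?thesis unfolding NCk_def by (rule rev_finite_subset) auto
  qed
  have bij: "bij_betw (insert {0}) A Bs"
  proof (rule bij_betw_byWitness[where f' = "\<lambda>Q. Q - {{0}}"])
    show "\<forall>P\<in>A. insert {0} P - {{0}} = P" unfolding A_def using ins_NCT(3) by blast
    show "\<forall>Q\<in>Bs. insert {0} (Q - {{0}}) = Q" unfolding Bs_def T_def using del_NCk(3) by blast
    show "insert {0} ` A \<subseteq> Bs"
    proof
      fix Q assume "Q \<in> insert {0} ` A"
      then obtain P where P: "P \<in> NCk k n" "card P = m" "Q = insert {0} P" unfolding A_def by blast
      have fP: "finite P" using P(1) finNCk unfolding NCk_def
        by (metis (no_types, lifting) P(1) finite_elements finite_atLeastAtMost mem_Collect_eq NCk_def)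
      show "Q \<in> Bs" unfolding Bs_def T_def using ins_NCT[OF P(1)] P fP by simp
    qed
    show "(\<lambda>Q. Q - {{0}}) ` Bs \<subseteq> A"
    proof
      fix P assume "P \<in> (\<lambda>Q. Q - {{0}}) ` Bs"
      then obtain Q where Q: "Q \<in> NCT k T" "card (blk Q 0) = 1" "card Q = m+1" "P = Q - {{0}}" unfolding Bs_def by blast
      have fQ: "finite Q" using Q(1) finT unfolding NCT_def by (simp add: finite_elements)
      have "{0} \<in> Q" using del_NCk(2) Q(1,2) unfolding T_def by blast
      then have "card P = m" using Q(3,4) fQ by simp
      then show "P \<in> A" unfolding A_def using del_NCk(1) Q(1,2,4) unfolding T_def by blast
    qed
  qed
  have "(\<Sum>P\<in>A. card {B\<in>P. card B = t * k}) = (\<Sum>P\<in>A. w (insert {0} P))"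
  proof (rule sum.cong[OF refl])
    fix P assume "P \<in> A"
    then have P: "P \<in> NCk k n" unfolding A_def by simp
    have "{B \<in> insert {0} P. B \<noteq> {0} \<and> card B = t*k} = {B\<in>P. card B = t * k}"
      using ins_NCT(3)[OF P] by blast
    then show "card {B\<in>P. card B = t * k} = w (insert {0} P)" unfolding w_def ins_NCT(2)[OF P] by simp
  qed
  also have "\<dots> = (\<Sum>Q\<in>Bs. w Q)" by (rule sum.reindex_bij_betw[OF bij])
  also have "\<dots> = Hs k t T 1 (m+1)"
    unfolding Hs_def MinT Bs_def w_def by (rule sum.inter_filter) (use finT finNCT_g in auto)
  finally have e1: "int (\<Sum>P\<in>A. card {B\<in>P. card B = t * k}) = int (Hs k t T 1 (m+1))" by simp
  have e2: "int (Hs k t T 1 (m+1)) = h k t n 1 (m+1)"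
    using Hthm[OF assms(1) _ finT cT] assms(4) by simp
  have e3: "h k t n 1 (m+1) = ibinom (int (n * k)) (int m - 1) * ibinom (int n - int t - 1) (int m - 2)"
  proof -
    have h: "h k t n 1 (m+1) = bn (int (n*k)) (int m - 1) * bn (int n - int t - 1) (int m - 2)
        + (if m = 1 \<and> n = t then 1 else 0)"
      unfolding h_def by (simp add: algebra_simps)
    have i1: "ibinom (int (n * k)) (int m - 1) = bn (int (n*k)) (int m - 1)"
      unfolding ibinom_def bn_def using assms(3) by auto
    have i2: "ibinom (int n - int t - 1) (int m - 2) = bn (int n - int t - 1) (int m - 2)
        + (if m = 1 \<and> n = t then 1 else 0)"
      unfolding ibinom_def bn_def using assms(3) by auto
    show ?thesis
    proof (cases "m = 1")
      case True
      have "bn (int (n*k)) 0 = 1" by (simp add: bn_0)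
      then show ?thesis unfolding h i1 i2 using True by (simp add: bn_neg algebra_simps)
    next
      case False
      then show ?thesis unfolding h i1 i2 by simp
    qed
  qed
  show ?thesis using e1 e2 e3 unfolding A_def by simp
qed


end
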